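(* For each $n\in\mathbb{N}$, fix an arbitrary $n$-qubit state $\rho$, let $U$ be a uniformly random Clifford unitary on $n$ qubits, and measure all qubits of $U\rho U^\dagger$ in the computational basis. Then for all $\alpha\in(0,1)$ and every fixed $x\in\{0,1\}^n$, $$\Pr_U\left(p_x\ge\frac{\alpha}{2^n}\right)>\frac{(1-\alpha)^2}{2},$$ where $p_x=\mathrm{tr}(U\rho U^\dagger|x\rangle\langle x|)$.
   Context: The uniform distribution over the (finite) $n$-qubit Clifford group, i.e., the group of unitaries (modulo phase) mapping the $n$-qubit Pauli group to itself under conjugation. *)

theory Defs
  imports Complex_Main "Jordan_Normal_Form.Matrix"
begin

definition dagger :: "complex mat \<Rightarrow> complex mat" where
  "dagger A = mat (dim_col A) (dim_row A) (\<lambda>(i,j). cnj (A $$ (j,i)))"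

definition mtrace :: "complex mat \<Rightarrow> complex" where
  "mtrace A = (\<Sum>i<dim_row A. A $$ (i,i))"

definition unitary_mat :: "nat \<Rightarrow> complex mat \<Rightarrow> bool" where
  "unitary_mat N U \<longleftrightarrow> U \<in> carrier_mat N N \<and> dagger U * U = 1\<^sub>m N"

definition density_mat :: "nat \<Rightarrow> complex mat \<Rightarrow> bool" where
  "density_mat N \<rho> \<longleftrightarrow> \<rho> \<in> carrier_mat N N \<and> dagger \<rho> = \<rho> \<and>
     (\<forall>v \<in> carrier_vec N. let q = (\<Sum>i<N. cnj (v $ i) * (\<rho> *\<^sub>v v) $ i) in Im q = 0 \<and> Re q \<ge> 0) \<and>
     mtrace \<rho> = 1"

definition pauliI :: "complex mat" where "pauliI = mat 2 2 (\<lambda>(i,j). if i = j then 1 else 0)"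
definition pauliX :: "complex mat" where "pauliX = mat 2 2 (\<lambda>(i,j). if i \<noteq> j then 1 else 0)"
definition pauliY :: "complex mat" where
  "pauliY = mat 2 2 (\<lambda>(i,j). if i = 0 \<and> j = 1 then -\<i> else if i = 1 \<and> j = 0 then \<i> else 0)"
definition pauliZ :: "complex mat" where
  "pauliZ = mat 2 2 (\<lambda>(i,j). if i = j then (if i = 0 then 1 else -1) else 0)"

text \<open>Tensor (Kronecker) product of a list of 2x2 matrices; qubit k corresponds to bit k
  of the computational-basis index.\<close>
definition tensor_list :: "complex mat list \<Rightarrow> complex mat" where
  "tensor_list ps = mat (2 ^ length ps) (2 ^ length ps)
     (\<lambda>(r,c). \<Prod>k<length ps. (ps ! k) $$ (r div 2 ^ k mod 2, c div 2 ^ k mod 2))"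

definition pauli_group :: "nat \<Rightarrow> complex mat set" where
  "pauli_group n = {c \<cdot>\<^sub>m tensor_list ps | c ps.
     c \<in> {1, -1, \<i>, -\<i>} \<and> length ps = n \<and> set ps \<subseteq> {pauliI, pauliX, pauliY, pauliZ}}"

definition clifford :: "nat \<Rightarrow> complex mat set" where
  "clifford n = {U. unitary_mat (2 ^ n) U \<and>
     (\<forall>P \<in> pauli_group n. U * P * dagger U \<in> pauli_group n)}"

definition phase_rel :: "nat \<Rightarrow> (complex mat \<times> complex mat) set" where
  "phase_rel n = {(U, V). U \<in> clifford n \<and> V \<in> clifford n \<and> (\<exists>c. cmod c = 1 \<and> V = c \<cdot>\<^sub>m U)}"

definition clifford_mod_phase :: "nat \<Rightarrow> complex mat set set" where
  "clifford_mod_phase n = clifford n // phase_rel n"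

definition basis_proj :: "nat \<Rightarrow> nat \<Rightarrow> complex mat" where
  "basis_proj N x = mat N N (\<lambda>(i,j). if i = x \<and> j = x then 1 else 0)"

definition outcome_prob :: "nat \<Rightarrow> complex mat \<Rightarrow> complex mat \<Rightarrow> nat \<Rightarrow> real" where
  "outcome_prob n U \<rho> x = Re (mtrace (U * \<rho> * dagger U * basis_proj (2 ^ n) x))"

text \<open>Probability of an event over a uniformly random element of the Clifford group modulo phase.
  The event is required for all representatives of the class (it is phase invariant anyway).\<close>
definition clifford_prob :: "nat \<Rightarrow> (complex mat \<Rightarrow> bool) \<Rightarrow> real" where
  "clifford_prob n E = real (card {C \<in> clifford_mod_phase n. \<forall>U \<in> C. E U})
                        / real (card (clifford_mod_phase n))"

end

theory Submission
  imports Defs "Jordan_Normal_Form.Determinant"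
begin

lemma sum_double_split:
  fixes h :: "nat \<Rightarrow> 'a::comm_monoid_add"
  shows "(\<Sum>m<2*K. h m) = (\<Sum>m<K. h (2*m) + h (2*m+1))"
proof (induction K)
  case 0 then show ?case by simp
next
  case (Suc K)
  have "2 * Suc K = Suc (Suc (2*K))" by simp
  then show ?case using Suc by (simp add: add.assoc)
qed

lemma bit_split:
  fixes m b k :: nat
  assumes "b < 2"
  shows "(2*m+b) div (2*2^k) mod 2 = m div 2^k mod 2"
proof -
  have "(2*m+b) div (2*2^k) = ((2*m+b) div 2) div 2^k"
    by (simp add: div_mult2_eq)
  also have "(2*m+b) div 2 = m" using assms by simp
  finally show ?thesis by simp
qed

lemma sum_bits_prod:
  fixes g :: "nat \<Rightarrow> nat \<Rightarrow> 'a::comm_semiring_1"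
  shows "(\<Sum>m<2^n. \<Prod>k<n. g k (m div 2^k mod 2)) = (\<Prod>k<n. g k 0 + g k 1)"
proof (induction n arbitrary: g)
  case 0 then show ?case by simp
next
  case (Suc n)
  have e: "(\<Prod>k<Suc n. g k ((2*m+b) div 2^k mod 2)) = g 0 b * (\<Prod>k<n. g (Suc k) (m div 2^k mod 2))"
    if "b < 2" for m b
    using that by (simp add: prod.lessThan_Suc_shift bit_split del: prod.lessThan_Suc)
  have "(\<Sum>m<2^Suc n. \<Prod>k<Suc n. g k (m div 2^k mod 2))
      = (\<Sum>m<2^n. (\<Prod>k<Suc n. g k ((2*m+0) div 2^k mod 2)) + (\<Prod>k<Suc n. g k ((2*m+1) div 2^k mod 2)))"
    using sum_double_split[of "\<lambda>m. \<Prod>k<Suc n. g k (m div 2^k mod 2)" "2^n"] by simp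
  also have "\<dots> = (\<Sum>m<2^n. (g 0 0 + g 0 1) * (\<Prod>k<n. g (Suc k) (m div 2^k mod 2)))"
    by (simp only: e, simp add: algebra_simps)
  also have "\<dots> = (g 0 0 + g 0 1) * (\<Prod>k<n. g (Suc k) 0 + g (Suc k) 1)"
    by (simp add: sum_distrib_left[symmetric] Suc.IH[of "\<lambda>k. g (Suc k)"])
  also have "\<dots> = (\<Prod>k<Suc n. g k 0 + g k 1)"
    by (simp add: prod.lessThan_Suc_shift del: prod.lessThan_Suc)
  finally show ?case .
qed

lemma bits_eq:
  fixes i l :: nat
  assumes "i < 2^n" "l < 2^n" "\<forall>k<n. i div 2^k mod 2 = l div 2^k mod 2"
  shows "i = l"
  using assms
proof (induction n arbitrary: i l)
  case 0 then show ?case by simp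
next
  case (Suc n)
  have "i div 2 = l div 2"
  proof (rule Suc.IH)
    show "i div 2 < 2^n" "l div 2 < 2^n" using Suc.prems by auto
    show "\<forall>k<n. i div 2 div 2 ^ k mod 2 = l div 2 div 2 ^ k mod 2"
    proof (intro allI impI)
      fix k assume "k < n"
      then have "i div 2^(Suc k) mod 2 = l div 2^(Suc k) mod 2" using Suc.prems by auto
      then show "i div 2 div 2 ^ k mod 2 = l div 2 div 2 ^ k mod 2"
        by (simp add: div_mult2_eq)
    qed
  qed
  moreover have "i mod 2 = l mod 2" using Suc.prems(3)[rule_format, of 0] by simp
  ultimately show ?case by (metis div_mult_mod_eq)
qed

definition PL :: "'b set \<Rightarrow> nat \<Rightarrow> 'b list set" where
  "PL S n = {xs. set xs \<subseteq> S \<and> length xs = n}"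

lemma PL_Suc: "PL S (Suc n) = (\<lambda>(p,ps). p # ps) ` (S \<times> PL S n)"
  unfolding PL_def by (auto simp: length_Suc_conv image_iff)

lemma finite_PL: "finite S \<Longrightarrow> finite (PL S n)"
  unfolding PL_def by (rule finite_lists_length_eq)

lemma card_PL: "finite S \<Longrightarrow> card (PL S n) = card S ^ n"
  unfolding PL_def by (rule card_lists_length_eq)

lemma sum_PL_prod:
  fixes g :: "nat \<Rightarrow> 'b \<Rightarrow> 'a::comm_semiring_1"
  assumes "finite S"
  shows "(\<Sum>ps\<in>PL S n. \<Prod>k<n. g k (ps!k)) = (\<Prod>k<n. \<Sum>p\<in>S. g k p)"
proof (induction n arbitrary: g)
  case 0
  have "PL S 0 = {[]}" by (auto simp: PL_def)
  then show ?case by simp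
next
  case (Suc n)
  have inj: "inj_on (\<lambda>(p,ps). p # ps) (S \<times> PL S n)" by (auto simp: inj_on_def)
  have "(\<Sum>ps\<in>PL S (Suc n). \<Prod>k<Suc n. g k (ps!k))
      = (\<Sum>(p,ps)\<in>S \<times> PL S n. \<Prod>k<Suc n. g k ((p#ps)!k))"
    unfolding PL_Suc by (subst sum.reindex[OF inj]) (simp add: case_prod_unfold)
  also have "\<dots> = (\<Sum>(p,ps)\<in>S \<times> PL S n. g 0 p * (\<Prod>k<n. g (Suc k) (ps!k)))"
    by (simp add: prod.lessThan_Suc_shift del: prod.lessThan_Suc)
  also have "\<dots> = (\<Sum>p\<in>S. \<Sum>ps\<in>PL S n. g 0 p * (\<Prod>k<n. g (Suc k) (ps!k)))"
    by (rule sum.cartesian_product[symmetric])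
  also have "\<dots> = (\<Sum>p\<in>S. g 0 p) * (\<Prod>k<n. \<Sum>p\<in>S. g (Suc k) p)"
    by (simp add: sum_distrib_left[symmetric] sum_distrib_right Suc.IH[of "\<lambda>k. g (Suc k)"])
  also have "\<dots> = (\<Prod>k<Suc n. \<Sum>p\<in>S. g k p)"
    by (simp add: prod.lessThan_Suc_shift del: prod.lessThan_Suc)
  finally show ?case .
qed

definition S4 :: "complex mat set" where "S4 = {pauliI, pauliX, pauliY, pauliZ}"
definition G4 :: "complex set" where "G4 = {1, -1, \<i>, -\<i>}"

lemma less2: "(i::nat) < 2 \<longleftrightarrow> i = 0 \<or> i = 1" by auto

lemma pauli_carrier: "pauliI \<in> carrier_mat 2 2" "pauliX \<in> carrier_mat 2 2"
  "pauliY \<in> carrier_mat 2 2" "pauliZ \<in> carrier_mat 2 2"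
  by (auto simp: pauliI_def pauliX_def pauliY_def pauliZ_def)

lemma S4_carrier: "p \<in> S4 \<Longrightarrow> p \<in> carrier_mat 2 2"
  using pauli_carrier by (auto simp: S4_def)

lemma pauli_entries:
  "pauliI $$ (0,0) = 1" "pauliI $$ (0,1) = 0" "pauliI $$ (1,0) = 0" "pauliI $$ (1,1) = 1"
  "pauliX $$ (0,0) = 0" "pauliX $$ (0,1) = 1" "pauliX $$ (1,0) = 1" "pauliX $$ (1,1) = 0"
  "pauliY $$ (0,0) = 0" "pauliY $$ (0,1) = -\<i>" "pauliY $$ (1,0) = \<i>" "pauliY $$ (1,1) = 0"
  "pauliZ $$ (0,0) = 1" "pauliZ $$ (0,1) = 0" "pauliZ $$ (1,0) = 0" "pauliZ $$ (1,1) = -1"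
  by (auto simp: pauliI_def pauliX_def pauliY_def pauliZ_def)

lemma pauli_entries_Suc:
  "pauliI $$ (0,Suc 0) = 0" "pauliI $$ (Suc 0,0) = 0" "pauliI $$ (Suc 0,Suc 0) = 1"
  "pauliX $$ (0,Suc 0) = 1" "pauliX $$ (Suc 0,0) = 1" "pauliX $$ (Suc 0,Suc 0) = 0"
  "pauliY $$ (0,Suc 0) = -\<i>" "pauliY $$ (Suc 0,0) = \<i>" "pauliY $$ (Suc 0,Suc 0) = 0"
  "pauliZ $$ (0,Suc 0) = 0" "pauliZ $$ (Suc 0,0) = 0" "pauliZ $$ (Suc 0,Suc 0) = -1"
  using pauli_entries by simp_all

lemma pauli_dims: "dim_row pauliI = 2" "dim_col pauliI = 2" "dim_row pauliX = 2" "dim_col pauliX = 2"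
  "dim_row pauliY = 2" "dim_col pauliY = 2" "dim_row pauliZ = 2" "dim_col pauliZ = 2"
  by (auto simp: pauliI_def pauliX_def pauliY_def pauliZ_def)

lemma pauli_distinct[simp]:
  "pauliI \<noteq> pauliX" "pauliI \<noteq> pauliY" "pauliI \<noteq> pauliZ"
  "pauliX \<noteq> pauliY" "pauliX \<noteq> pauliZ" "pauliY \<noteq> pauliZ"
  "pauliX \<noteq> pauliI" "pauliY \<noteq> pauliI" "pauliZ \<noteq> pauliI"
  "pauliY \<noteq> pauliX" "pauliZ \<noteq> pauliX" "pauliZ \<noteq> pauliY"
  by (metis pauli_entries zero_neq_one complex_i_not_zero neg_equal_0_iff_equal one_neq_neg_one)+

lemma mult2: assumes "A \<in> carrier_mat 2 2" "B \<in> carrier_mat 2 2" "i < 2" "j < 2"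
  shows "(A * B) $$ (i,j) = A $$ (i,0) * B $$ (0,j) + A $$ (i,1) * B $$ (1,j)"
  using assms by (simp add: scalar_prod_def numeral_2_eq_2)

lemma row_col2: assumes "A \<in> carrier_mat 2 2" "B \<in> carrier_mat 2 2" "i < 2" "j < 2"
  shows "row A i \<bullet> col B j = A $$ (i,0) * B $$ (0,j) + A $$ (i,1) * B $$ (1,j)"
  using mult2[OF assms] assms by simp

lemma mat2_eqI: assumes "A \<in> carrier_mat 2 2" "B \<in> carrier_mat 2 2"
  "A $$ (0,0) = B $$ (0,0)" "A $$ (0,1) = B $$ (0,1)" "A $$ (1,0) = B $$ (1,0)" "A $$ (1,1) = B $$ (1,1)"
  shows "A = B"
  by (rule eq_matI) (use assms in \<open>auto simp: less2\<close>)

lemmas pc = pauli_carrier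

lemma pauli_I_one: "pauliI = 1\<^sub>m 2"
  by (rule mat2_eqI) (auto simp: pc pauli_entries pauli_entries_Suc)


lemma pauli_prods:
  "pauliI * p = p" if "p \<in> carrier_mat 2 2" for p
  using that by (simp add: pauli_I_one)

lemma pauli_prods2:
  "p * pauliI = p" if "p \<in> carrier_mat 2 2" for p
  using that by (simp add: pauli_I_one)

lemma pauli_table:
  "pauliX * pauliX = pauliI" "pauliY * pauliY = pauliI" "pauliZ * pauliZ = pauliI"
  "pauliX * pauliY = \<i> \<cdot>\<^sub>m pauliZ" "pauliY * pauliX = (-\<i>) \<cdot>\<^sub>m pauliZ"
  "pauliY * pauliZ = \<i> \<cdot>\<^sub>m pauliX" "pauliZ * pauliY = (-\<i>) \<cdot>\<^sub>m pauliX"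
  "pauliZ * pauliX = \<i> \<cdot>\<^sub>m pauliY" "pauliX * pauliZ = (-\<i>) \<cdot>\<^sub>m pauliY"
  by (auto intro!: mat2_eqI intro: mult_carrier_mat smult_carrier_mat simp: pc row_col2 pauli_entries pauli_entries_Suc pauli_dims)

lemmas bf = pc row_col2 pauli_entries pauli_entries_Suc pauli_dims

lemma smult_smult_mat: "a \<cdot>\<^sub>m (b \<cdot>\<^sub>m A) = (a * b) \<cdot>\<^sub>m (A :: 'a::comm_ring_1 mat)"
  by (rule eq_matI) auto

lemma one_smult_mat: "1 \<cdot>\<^sub>m A = (A :: 'a::comm_ring_1 mat)"
  by (rule eq_matI) auto

lemma S4E: assumes "p \<in> S4"
  obtains "p = pauliI" | "p = pauliX" | "p = pauliY" | "p = pauliZ"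
  using assms unfolding S4_def by auto

definition chi1 :: "complex mat \<Rightarrow> complex mat \<Rightarrow> complex" where
  "chi1 p q = (if p = pauliI \<or> q = pauliI \<or> p = q then 1 else -1)"

definition pmul :: "complex mat \<Rightarrow> complex mat \<Rightarrow> complex mat" where
  "pmul p q = (if p = pauliI then q else if q = pauliI then p else if p = q then pauliI
     else if p \<noteq> pauliZ \<and> q \<noteq> pauliZ then pauliZ else if p \<noteq> pauliX \<and> q \<noteq> pauliX then pauliX else pauliY)"

definition pph :: "complex mat \<Rightarrow> complex mat \<Rightarrow> complex" where
  "pph p q = (if p = pauliI \<or> q = pauliI \<or> p = q then 1
     else if (p = pauliX \<and> q = pauliY) \<or> (p = pauliY \<and> q = pauliZ) \<or> (p = pauliZ \<and> q = pauliX) then \<i> else -\<i>)"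

lemma IX: "pauliI * p = p" "p * pauliI = p" if "p \<in> S4"
  using that by (auto elim!: S4E simp: pauli_I_one pauli_dims)

lemma chi1_comm: "p \<in> S4 \<Longrightarrow> q \<in> S4 \<Longrightarrow> p * q = chi1 p q \<cdot>\<^sub>m (q * p)"
  by (elim S4E) (simp_all add: chi1_def pauli_table IX S4_def smult_smult_mat one_smult_mat)

lemma pmul_eq: "p \<in> S4 \<Longrightarrow> q \<in> S4 \<Longrightarrow> p * q = pph p q \<cdot>\<^sub>m pmul p q"
  by (elim S4E) (simp_all add: pph_def pmul_def pauli_table IX S4_def smult_smult_mat one_smult_mat)

lemma pmul_S4: "p \<in> S4 \<Longrightarrow> q \<in> S4 \<Longrightarrow> pmul p q \<in> S4"
  unfolding S4_def pmul_def by auto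

lemma pph_G4: "pph p q \<in> G4"
  unfolding G4_def pph_def by auto

lemma G4_mult: "a \<in> G4 \<Longrightarrow> b \<in> G4 \<Longrightarrow> a * b \<in> G4"
  unfolding G4_def by auto

lemma G4_simps: "1 \<in> G4" "-1 \<in> G4" "\<i> \<in> G4" "-\<i> \<in> G4"
  unfolding G4_def by auto

lemma G4_cnj: "a \<in> G4 \<Longrightarrow> cnj a * a = 1"
  unfolding G4_def by auto

lemma G4_norm: "a \<in> G4 \<Longrightarrow> cmod a = 1"
  unfolding G4_def by auto

lemma S4_sq: "p \<in> S4 \<Longrightarrow> p * p = pauliI"
  by (elim S4E) (simp_all add: pauli_table IX S4_def)

lemma S4_herm: "p \<in> S4 \<Longrightarrow> a < 2 \<Longrightarrow> b < 2 \<Longrightarrow> cnj (p $$ (a,b)) = p $$ (b,a)"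
  by (elim S4E) (auto simp: less2 bf)

lemma S4_compl: "a < 2 \<Longrightarrow> b < 2 \<Longrightarrow> c < 2 \<Longrightarrow> d < 2 \<Longrightarrow>
   (\<Sum>p\<in>S4. p $$ (a,b) * p $$ (c,d)) = (if a = d \<and> b = c then 2 else 0)"
  unfolding S4_def less2 by (auto simp: bf)

lemma chi_orth1: "p \<in> S4 \<Longrightarrow> q \<in> S4 \<Longrightarrow>
   (\<Sum>w\<in>S4. chi1 w p * chi1 w q) = (if p = q then 4 else 0)"
  by (elim S4E) (simp_all add: S4_def chi1_def)

lemma chi1_pm: "chi1 p q = 1 \<or> chi1 p q = -1"
  unfolding chi1_def by auto

lemma chi1_sq: "chi1 p q * chi1 p q = 1"
  unfolding chi1_def by auto

lemma chi1_I: "chi1 pauliI q = 1" "chi1 q pauliI = 1"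
  unfolding chi1_def by auto

lemma chi1_sym: "chi1 p q = chi1 q p"
  unfolding chi1_def by auto

lemma anti1: "p \<in> S4 \<Longrightarrow> q \<in> S4 \<Longrightarrow> p \<noteq> pauliI \<Longrightarrow> q \<noteq> pauliI \<Longrightarrow>
   \<exists>s\<in>S4. chi1 s p = -1 \<and> chi1 s q = -1"
  by (elim S4E) (auto simp: S4_def chi1_def)

lemma finite_S4: "finite S4" unfolding S4_def by simp
lemma card_S4: "card S4 = 4" unfolding S4_def by simp
lemma I_S4: "pauliI \<in> S4" unfolding S4_def by simp

lemma tl_dims[simp]: "dim_row (tensor_list ps) = 2 ^ length ps" "dim_col (tensor_list ps) = 2 ^ length ps"
  by (auto simp: tensor_list_def)

lemma tl_carrier: "tensor_list ps \<in> carrier_mat (2 ^ length ps) (2 ^ length ps)"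
  unfolding carrier_mat_def by simp

lemma bit_lt2: "(i::nat) div 2^k mod 2 < 2" by simp

lemma tl_index: "r < 2 ^ length ps \<Longrightarrow> c < 2 ^ length ps \<Longrightarrow>
  tensor_list ps $$ (r,c) = (\<Prod>k<length ps. ps!k $$ (r div 2^k mod 2, c div 2^k mod 2))"
  unfolding tensor_list_def by (subst index_mat(1)) auto

lemma prod_if_gen:
  "(\<Prod>m<n. (if Q m then (a::'a::comm_semiring_1) else 0)) = (if \<forall>m<n. Q m then a^n else 0)"
proof (cases "\<forall>m<n. Q m")
  case True
  then have "(\<Prod>m<n. (if Q m then a else 0)) = (\<Prod>m<n. a)" by (intro prod.cong) auto
  then show ?thesis using True by simp
next
  case False
  then obtain m where "m < n" "\<not> Q m" by auto
  then have "(\<Prod>m<n. (if Q m then a else 0)) = 0" by (intro prod_zero) auto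
  then show ?thesis by (subst if_not_P[OF False])
qed

lemmas prod_if_2 = prod_if_gen[where a=2]
lemmas prod_if_4 = prod_if_gen[where a=4]
lemma smult2: "B \<in> carrier_mat 2 2 \<Longrightarrow> a < 2 \<Longrightarrow> b < 2 \<Longrightarrow> (c \<cdot>\<^sub>m B) $$ (a,b) = c * B $$ (a,b)"
  by auto

lemma tl_mult:
  assumes len: "length qs = length ps" and P: "\<forall>p\<in>set ps. p \<in> carrier_mat 2 2" and Q: "\<forall>q\<in>set qs. q \<in> carrier_mat 2 2"
  shows "tensor_list ps * tensor_list qs = tensor_list (map2 (*) ps qs)"
proof (rule eq_matI)
  let ?n = "length ps"
  fix i j assume i: "i < dim_row (tensor_list (map2 (*) ps qs))" and j: "j < dim_col (tensor_list (map2 (*) ps qs))"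
  then have i': "i < 2^?n" and j': "j < 2^?n" using len by auto
  have Pk: "ps!k \<in> carrier_mat 2 2" and Qk: "qs!k \<in> carrier_mat 2 2" if "k < ?n" for k
    using that P Q len by auto
  have "(tensor_list ps * tensor_list qs) $$ (i,j) = (\<Sum>m<2^?n. tensor_list ps $$ (i,m) * tensor_list qs $$ (m,j))"
    using i' j' len by (simp add: scalar_prod_def atLeast0LessThan)
  also have "\<dots> = (\<Sum>m<2^?n. \<Prod>k<?n. ps!k $$ (i div 2^k mod 2, m div 2^k mod 2) * qs!k $$ (m div 2^k mod 2, j div 2^k mod 2))"
    using i' j' len by (simp add: tl_index prod.distrib)
  also have "\<dots> = (\<Prod>k<?n. ps!k $$ (i div 2^k mod 2, 0) * qs!k $$ (0, j div 2^k mod 2)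
                   + ps!k $$ (i div 2^k mod 2, 1) * qs!k $$ (1, j div 2^k mod 2))"
    by (rule sum_bits_prod)
  also have "\<dots> = (\<Prod>k<?n. (ps!k * qs!k) $$ (i div 2^k mod 2, j div 2^k mod 2))"
    by (rule prod.cong[OF refl], subst mult2[OF Pk Qk]) auto
  also have "\<dots> = tensor_list (map2 (*) ps qs) $$ (i,j)"
    using i' j' len by (simp add: tl_index)
  finally show "(tensor_list ps * tensor_list qs) $$ (i,j) = tensor_list (map2 (*) ps qs) $$ (i,j)" .
qed (use len in auto)

lemma tl_scaled:
  assumes "length As = n" "length Bs = n" "\<forall>k<n. As!k = c k \<cdot>\<^sub>m Bs!k" "\<forall>k<n. Bs!k \<in> carrier_mat 2 2"
  shows "tensor_list As = (\<Prod>k<n. c k) \<cdot>\<^sub>m tensor_list Bs"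
proof (rule eq_matI)
  fix i j assume "i < dim_row ((\<Prod>k<n. c k) \<cdot>\<^sub>m tensor_list Bs)" "j < dim_col ((\<Prod>k<n. c k) \<cdot>\<^sub>m tensor_list Bs)"
  then have i: "i < 2^n" "j < 2^n" using assms by auto
  have "tensor_list As $$ (i,j) = (\<Prod>k<n. c k * Bs!k $$ (i div 2^k mod 2, j div 2^k mod 2))"
    using i assms by (simp add: tl_index smult2)
  also have "\<dots> = (\<Prod>k<n. c k) * tensor_list Bs $$ (i,j)"
    using i assms by (simp add: tl_index prod.distrib)
  finally show "tensor_list As $$ (i,j) = ((\<Prod>k<n. c k) \<cdot>\<^sub>m tensor_list Bs) $$ (i,j)"
    using i assms by simp
qed (use assms in auto)

lemma tl_one: "tensor_list (replicate n pauliI) = 1\<^sub>m (2^n)"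
proof (rule eq_matI)
  fix i j assume "i < dim_row (1\<^sub>m (2^n))" "j < dim_col (1\<^sub>m (2^n) :: complex mat)"
  then have i: "i < 2^n" "j < 2^n" by auto
  have "tensor_list (replicate n pauliI) $$ (i,j) = (\<Prod>k<n. if i div 2^k mod 2 = j div 2^k mod 2 then 1 else 0)"
    using i by (simp add: tl_index pauli_I_one)
  also have "\<dots> = (if i = j then 1 else 0)"
    using bits_eq[OF i] by (auto simp: prod_if_gen)
  finally show "tensor_list (replicate n pauliI) $$ (i,j) = 1\<^sub>m (2^n) $$ (i,j)" using i by simp
qed auto

lemma dagger_dims[simp]: "dim_row (dagger A) = dim_col A" "dim_col (dagger A) = dim_row A"
  by (simp_all only: dagger_def dim_row_mat dim_col_mat)

lemma index_dagger[simp]: "i < dim_col A \<Longrightarrow> j < dim_row A \<Longrightarrow> dagger A $$ (i,j) = cnj (A $$ (j,i))"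
  unfolding dagger_def by (subst index_mat(1)) auto

lemma dagger_carrier: "A \<in> carrier_mat nr nc \<Longrightarrow> dagger A \<in> carrier_mat nc nr"
  unfolding carrier_mat_def by simp

lemma dagger_mult: assumes "A \<in> carrier_mat a b" "B \<in> carrier_mat b c"
  shows "dagger (A * B) = dagger B * dagger A"
  by (rule eq_matI) (use assms in \<open>auto simp: scalar_prod_def mult.commute\<close>)

lemma dagger_dagger: "dagger (dagger A) = A"
  by (rule eq_matI) auto

lemma dagger_smult: "dagger (c \<cdot>\<^sub>m A) = cnj c \<cdot>\<^sub>m dagger A"
  by (rule eq_matI) auto

lemma dagger_add: assumes "A \<in> carrier_mat a b" "B \<in> carrier_mat a b"
  shows "dagger (A + B) = dagger A + dagger B"
  by (rule eq_matI) (use assms in auto)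

lemma dagger_one: "dagger (1\<^sub>m n) = 1\<^sub>m n"
  by (rule eq_matI) auto

abbreviation "LL n \<equiv> PL S4 n"

lemma LL_len: "ps \<in> LL n \<Longrightarrow> length ps = n" by (simp add: PL_def)
lemma LL_nth: "ps \<in> LL n \<Longrightarrow> k < n \<Longrightarrow> ps!k \<in> S4" by (auto simp: PL_def)
lemma LL_set: "ps \<in> LL n \<Longrightarrow> set ps \<subseteq> S4" by (simp add: PL_def)
lemma LL_carr: "ps \<in> LL n \<Longrightarrow> \<forall>p\<in>set ps. p \<in> carrier_mat 2 2"
  using S4_carrier by (auto simp: PL_def)
lemma LL_tl_carrier: "ps \<in> LL n \<Longrightarrow> tensor_list ps \<in> carrier_mat (2^n) (2^n)"
  using tl_carrier LL_len by metis

lemma tl_herm: assumes "ps \<in> LL n" shows "dagger (tensor_list ps) = tensor_list ps"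
proof (rule eq_matI)
  fix i j assume "i < dim_row (tensor_list ps)" "j < dim_col (tensor_list ps)"
  then have i: "i < 2^n" "j < 2^n" using LL_len[OF assms] by auto
  have "dagger (tensor_list ps) $$ (i,j) = cnj (\<Prod>k<n. ps!k $$ (j div 2^k mod 2, i div 2^k mod 2))"
    using i LL_len[OF assms] by (simp add: tl_index)
  also have "\<dots> = (\<Prod>k<n. ps!k $$ (i div 2^k mod 2, j div 2^k mod 2))"
    by (simp add: S4_herm LL_nth[OF assms])
  finally show "dagger (tensor_list ps) $$ (i,j) = tensor_list ps $$ (i,j)"
    using i LL_len[OF assms] by (simp add: tl_index)
qed auto

definition chi :: "complex mat list \<Rightarrow> complex mat list \<Rightarrow> complex" where
  "chi ws ps = (\<Prod>k<length ps. chi1 (ws!k) (ps!k))"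

lemma tl_comm: assumes "ws \<in> LL n" "ps \<in> LL n"
  shows "tensor_list ws * tensor_list ps = chi ws ps \<cdot>\<^sub>m (tensor_list ps * tensor_list ws)"
proof -
  have "tensor_list ws * tensor_list ps = tensor_list (map2 (*) ws ps)"
    using assms by (intro tl_mult) (auto simp: LL_len LL_carr)
  also have "\<dots> = (\<Prod>k<n. chi1 (ws!k) (ps!k)) \<cdot>\<^sub>m tensor_list (map2 (*) ps ws)"
  proof (rule tl_scaled)
    show "\<forall>k<n. map2 (*) ws ps ! k = chi1 (ws ! k) (ps ! k) \<cdot>\<^sub>m map2 (*) ps ws ! k"
    proof (intro allI impI)
      fix k assume k: "k < n"
      have "ws!k * ps!k = chi1 (ws ! k) (ps ! k) \<cdot>\<^sub>m (ps!k * ws!k)"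
        by (rule chi1_comm[OF LL_nth[OF assms(1) k] LL_nth[OF assms(2) k]])
      then show "map2 (*) ws ps ! k = chi1 (ws ! k) (ps ! k) \<cdot>\<^sub>m map2 (*) ps ws ! k"
        using k assms by (simp add: LL_len)
    qed
    show "\<forall>k<n. map2 (*) ps ws ! k \<in> carrier_mat 2 2"
    proof (intro allI impI)
      fix k assume k: "k < n"
      have "ps!k \<in> carrier_mat 2 2" "ws!k \<in> carrier_mat 2 2"
        using S4_carrier LL_nth[OF assms(1) k] LL_nth[OF assms(2) k] by auto
      then show "map2 (*) ps ws ! k \<in> carrier_mat 2 2" using k assms by (simp add: LL_len mult_carrier_mat)
    qed
  qed (use assms in \<open>auto simp: LL_len\<close>)
  also have "tensor_list (map2 (*) ps ws) = tensor_list ps * tensor_list ws"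
    using assms by (intro tl_mult[symmetric]) (auto simp: LL_len LL_carr)
  finally show ?thesis using assms by (simp add: chi_def LL_len)
qed

lemma tl_sq: assumes "ws \<in> LL n" shows "tensor_list ws * tensor_list ws = 1\<^sub>m (2^n)"
proof -
  have "tensor_list ws * tensor_list ws = tensor_list (map2 (*) ws ws)"
    using assms by (intro tl_mult) (auto simp: LL_len LL_carr)
  also have "map2 (*) ws ws = replicate n pauliI"
    using assms by (intro nth_equalityI) (auto simp: LL_len LL_nth S4_sq)
  finally show ?thesis by (simp add: tl_one)
qed

lemma tl_conj: assumes "ws \<in> LL n" "ps \<in> LL n"
  shows "tensor_list ws * tensor_list ps * tensor_list ws = chi ws ps \<cdot>\<^sub>m tensor_list ps"
proof -
  have c: "tensor_list ws \<in> carrier_mat (2^n) (2^n)" "tensor_list ps \<in> carrier_mat (2^n) (2^n)"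
    using assms by (auto simp: LL_tl_carrier)
  have "tensor_list ws * tensor_list ps * tensor_list ws = (chi ws ps \<cdot>\<^sub>m (tensor_list ps * tensor_list ws)) * tensor_list ws"
    by (simp add: tl_comm[OF assms])
  also have "\<dots> = chi ws ps \<cdot>\<^sub>m (tensor_list ps * (tensor_list ws * tensor_list ws))"
    using c by (simp add: mult_smult_assoc_mat[of _ "2^n" "2^n"])
  also have "\<dots> = chi ws ps \<cdot>\<^sub>m tensor_list ps"
    using c by (simp add: tl_sq[OF assms(1)] right_mult_one_mat)
  finally show ?thesis .
qed

lemma prod_G4: "(\<And>k. k < (n::nat) \<Longrightarrow> f k \<in> G4) \<Longrightarrow> (\<Prod>k<n. f k) \<in> G4"
  by (induction n) (auto simp: G4_simps G4_mult)

lemma map2_pmul_LL: assumes "ws \<in> LL n" "ps \<in> LL n" shows "map2 pmul ws ps \<in> LL n"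
proof -
  have "length (map2 pmul ws ps) = n" using assms by (simp add: LL_len)
  moreover have "\<forall>k<n. map2 pmul ws ps ! k \<in> S4"
    using assms by (auto simp: LL_len intro!: pmul_S4 LL_nth)
  ultimately show ?thesis by (auto simp: PL_def in_set_conv_nth)
qed

lemma tl_prod: assumes "ws \<in> LL n" "ps \<in> LL n"
  shows "tensor_list ws * tensor_list ps = (\<Prod>k<n. pph (ws!k) (ps!k)) \<cdot>\<^sub>m tensor_list (map2 pmul ws ps)"
    and "map2 pmul ws ps \<in> LL n" and "(\<Prod>k<n. pph (ws!k) (ps!k)) \<in> G4"
proof -
  have "tensor_list ws * tensor_list ps = tensor_list (map2 (*) ws ps)"
    using assms by (intro tl_mult) (auto simp: LL_len LL_carr)
  also have "\<dots> = (\<Prod>k<n. pph (ws!k) (ps!k)) \<cdot>\<^sub>m tensor_list (map2 pmul ws ps)"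
  proof (rule tl_scaled)
    show "\<forall>k<n. map2 (*) ws ps ! k = pph (ws ! k) (ps ! k) \<cdot>\<^sub>m map2 pmul ws ps ! k"
    proof (intro allI impI)
      fix k assume k: "k < n"
      have "ws!k * ps!k = pph (ws ! k) (ps ! k) \<cdot>\<^sub>m pmul (ws!k) (ps!k)"
        by (rule pmul_eq[OF LL_nth[OF assms(1) k] LL_nth[OF assms(2) k]])
      then show "map2 (*) ws ps ! k = pph (ws ! k) (ps ! k) \<cdot>\<^sub>m map2 pmul ws ps ! k"
        using k assms by (simp add: LL_len)
    qed
    show "\<forall>k<n. map2 pmul ws ps ! k \<in> carrier_mat 2 2"
    proof (intro allI impI)
      fix k assume k: "k < n"
      have "pmul (ws!k) (ps!k) \<in> S4" using pmul_S4 LL_nth[OF assms(1) k] LL_nth[OF assms(2) k] by auto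
      then show "map2 pmul ws ps ! k \<in> carrier_mat 2 2" using k assms S4_carrier by (simp add: LL_len)
    qed
  qed (use assms in \<open>auto simp: LL_len\<close>)
  finally show "tensor_list ws * tensor_list ps = (\<Prod>k<n. pph (ws!k) (ps!k)) \<cdot>\<^sub>m tensor_list (map2 pmul ws ps)" .
  show "map2 pmul ws ps \<in> LL n" by (rule map2_pmul_LL[OF assms])
  show "(\<Prod>k<n. pph (ws!k) (ps!k)) \<in> G4" by (rule prod_G4) (simp add: pph_G4)
qed

lemma chi_sq: "chi ws ps * chi ws ps = 1"
  unfolding chi_def by (simp add: prod.distrib[symmetric] chi1_sq)

lemma chi_pm: "chi ws ps = 1 \<or> chi ws ps = -1"
proof -
  have "(chi ws ps - 1) * (chi ws ps + 1) = 0" using chi_sq[of ws ps] by (simp add: algebra_simps)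
  then have "chi ws ps - 1 = 0 \<or> chi ws ps + 1 = 0" by simp
  then show ?thesis
  proof
    assume "chi ws ps - 1 = 0" then show ?thesis by simp
  next
    assume "chi ws ps + 1 = 0" then have "chi ws ps = -1" by (simp add: eq_neg_iff_add_eq_0)
    then show ?thesis by simp
  qed
qed

lemma compl: assumes "i < 2^n" "j < 2^n" "k < 2^n" "l < 2^n"
  shows "(\<Sum>P\<in>LL n. tensor_list P $$ (i,j) * tensor_list P $$ (k,l)) = (if i = l \<and> j = k then 2^n else 0)"
proof -
  let ?b = "\<lambda>x m. x div 2^m mod (2::nat)"
  have "(\<Sum>P\<in>LL n. tensor_list P $$ (i,j) * tensor_list P $$ (k,l))
      = (\<Sum>P\<in>LL n. \<Prod>m<n. P!m $$ (?b i m, ?b j m) * P!m $$ (?b k m, ?b l m))"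
    using assms by (intro sum.cong refl) (simp add: tl_index LL_len prod.distrib)
  also have "\<dots> = (\<Prod>m<n. \<Sum>p\<in>S4. p $$ (?b i m, ?b j m) * p $$ (?b k m, ?b l m))"
    by (rule sum_PL_prod[OF finite_S4])
  also have "\<dots> = (\<Prod>m<n. if ?b i m = ?b l m \<and> ?b j m = ?b k m then 2 else 0)"
    by (simp add: S4_compl)
  also have "\<dots> = (if i = l \<and> j = k then 2^n else 0)"
    using bits_eq[OF assms(1) assms(4)] bits_eq[OF assms(2) assms(3)] by (auto simp: prod_if_2)
  finally show ?thesis .
qed

lemma chi_orth: assumes "P \<in> LL n" "Q \<in> LL n"
  shows "(\<Sum>W\<in>LL n. chi W P * chi W Q) = (if P = Q then 4^n else 0)"
proof -
  have "(\<Sum>W\<in>LL n. chi W P * chi W Q) = (\<Sum>W\<in>LL n. \<Prod>m<n. chi1 (W!m) (P!m) * chi1 (W!m) (Q!m))"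
    using assms by (simp add: chi_def LL_len prod.distrib)
  also have "\<dots> = (\<Prod>m<n. \<Sum>w\<in>S4. chi1 w (P!m) * chi1 w (Q!m))"
    by (rule sum_PL_prod[OF finite_S4])
  also have "\<dots> = (\<Prod>m<n. if P!m = Q!m then 4 else 0)"
    using assms by (simp add: chi_orth1 LL_nth)
  also have "\<dots> = (if P = Q then 4^n else 0)"
    using assms by (auto simp: prod_if_4 LL_len intro: nth_equalityI)
  finally show ?thesis .
qed

lemma finite_LL: "finite (LL n)" by (rule finite_PL[OF finite_S4])
lemma card_LL: "card (LL n) = 4^n" by (simp add: card_PL finite_S4 card_S4)
lemma I_LL: "replicate n pauliI \<in> LL n" by (auto simp: PL_def I_S4)

lemma cnj_self: "cmod c = 1 \<Longrightarrow> cnj c * c = 1"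
  using complex_norm_square[of c] by (simp add: mult.commute)

lemma smult_mult_l: "dim_col A = dim_row B \<Longrightarrow> (c \<cdot>\<^sub>m A) * B = c \<cdot>\<^sub>m (A * (B :: 'a::comm_ring_1 mat))"
  by (rule eq_matI) simp_all

lemma smult_mult_r: "dim_col A = dim_row B \<Longrightarrow> A * (c \<cdot>\<^sub>m B) = c \<cdot>\<^sub>m (A * (B :: 'a::comm_ring_1 mat))"
  by (rule eq_matI) simp_all

lemma assoc_dims: "dim_col A = dim_row B \<Longrightarrow> dim_col B = dim_row C \<Longrightarrow> A * B * C = A * (B * (C :: 'a::comm_ring_1 mat))"
proof -
  assume a: "dim_col A = dim_row B" "dim_col B = dim_row C"
  have "A \<in> carrier_mat (dim_row A) (dim_col A)" "B \<in> carrier_mat (dim_col A) (dim_col B)"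
    "C \<in> carrier_mat (dim_col B) (dim_col C)" using a unfolding carrier_mat_def by auto
  then show ?thesis by (rule assoc_mult_mat)
qed

lemmas msimps = smult_mult_l smult_mult_r assoc_dims smult_smult_mat

lemma cdims: "A \<in> carrier_mat a b \<Longrightarrow> dim_row A = a \<and> dim_col A = b" by auto

lemma pg_iff: "P \<in> pauli_group n \<longleftrightarrow> (\<exists>c ps. c \<in> G4 \<and> ps \<in> LL n \<and> P = c \<cdot>\<^sub>m tensor_list ps)"
  unfolding pauli_group_def G4_def PL_def S4_def by blast

lemma pg_carrier: "P \<in> pauli_group n \<Longrightarrow> P \<in> carrier_mat (2^n) (2^n)"
  unfolding pg_iff using LL_tl_carrier by auto

lemma pg_smult: assumes "c \<in> G4" "P \<in> pauli_group n" shows "c \<cdot>\<^sub>m P \<in> pauli_group n"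
proof -
  from assms(2) obtain d ps where d: "d \<in> G4" "ps \<in> LL n" "P = d \<cdot>\<^sub>m tensor_list ps" unfolding pg_iff by blast
  then have "c \<cdot>\<^sub>m P = (c*d) \<cdot>\<^sub>m tensor_list ps" by (simp add: smult_smult_mat)
  then show ?thesis unfolding pg_iff using d assms(1) G4_mult by blast
qed

lemma T_pg: "ps \<in> LL n \<Longrightarrow> tensor_list ps \<in> pauli_group n"
  unfolding pg_iff using G4_simps(1) one_smult_mat by metis

lemma pg_mult: assumes "P \<in> pauli_group n" "Q \<in> pauli_group n" shows "P * Q \<in> pauli_group n"
proof -
  from assms(1) obtain c ps where c: "c \<in> G4" "ps \<in> LL n" "P = c \<cdot>\<^sub>m tensor_list ps" unfolding pg_iff by blast
  from assms(2) obtain d qs where d: "d \<in> G4" "qs \<in> LL n" "Q = d \<cdot>\<^sub>m tensor_list qs" unfolding pg_iff by blast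
  have cr: "tensor_list ps \<in> carrier_mat (2^n) (2^n)" "tensor_list qs \<in> carrier_mat (2^n) (2^n)"
    using c d LL_tl_carrier by auto
  have "P * Q = (c * d) \<cdot>\<^sub>m (tensor_list ps * tensor_list qs)"
    using c d cdims[OF cr(1)] cdims[OF cr(2)] by (simp add: msimps mult.commute)
  also have "\<dots> = (c * d * (\<Prod>k<n. pph (ps!k) (qs!k))) \<cdot>\<^sub>m tensor_list (map2 pmul ps qs)"
    using tl_prod(1)[OF c(2) d(2)] by (simp add: smult_smult_mat)
  finally show ?thesis unfolding pg_iff using tl_prod(2,3)[OF c(2) d(2)] c d G4_mult by blast
qed

lemma chi_G4: "chi ws ps \<in> G4"
  using chi_pm[of ws ps] G4_simps by auto

definition NN :: "nat \<Rightarrow> nat" where "NN n = 2^n"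

lemma cliffD: assumes "U \<in> clifford n"
  shows "U \<in> carrier_mat (2^n) (2^n)" "dagger U * U = 1\<^sub>m (2^n)" "U * dagger U = 1\<^sub>m (2^n)"
    and "\<And>P. P \<in> pauli_group n \<Longrightarrow> U * P * dagger U \<in> pauli_group n"
proof -
  show U: "U \<in> carrier_mat (2^n) (2^n)" "dagger U * U = 1\<^sub>m (2^n)"
    using assms by (auto simp: clifford_def unitary_mat_def)
  show "U * dagger U = 1\<^sub>m (2^n)"
    by (rule mat_mult_left_right_inverse[OF dagger_carrier[OF U(1)] U(1) U(2)])
  show "\<And>P. P \<in> pauli_group n \<Longrightarrow> U * P * dagger U \<in> pauli_group n"
    using assms by (auto simp: clifford_def)
qed

lemma cliffI: assumes "U \<in> carrier_mat (2^n) (2^n)" "dagger U * U = 1\<^sub>m (2^n)"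
    "\<And>P. P \<in> pauli_group n \<Longrightarrow> U * P * dagger U \<in> pauli_group n"
  shows "U \<in> clifford n"
  using assms by (auto simp: clifford_def unitary_mat_def)

lemma T_cliff: assumes "ws \<in> LL n" shows "tensor_list ws \<in> clifford n"
proof (rule cliffI)
  have W: "tensor_list ws \<in> carrier_mat (2^n) (2^n)" using LL_tl_carrier[OF assms] .
  then show "tensor_list ws \<in> carrier_mat (2^n) (2^n)" .
  show "dagger (tensor_list ws) * tensor_list ws = 1\<^sub>m (2^n)"
    using tl_herm[OF assms] tl_sq[OF assms] by simp
  fix P assume "P \<in> pauli_group n"
  then obtain c ps where c: "c \<in> G4" "ps \<in> LL n" "P = c \<cdot>\<^sub>m tensor_list ps" unfolding pg_iff by blast
  have Pc: "tensor_list ps \<in> carrier_mat (2^n) (2^n)" using LL_tl_carrier[OF c(2)] .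
  have "tensor_list ws * P * dagger (tensor_list ws) = c \<cdot>\<^sub>m (tensor_list ws * tensor_list ps * tensor_list ws)"
    using c cdims[OF W] cdims[OF Pc] tl_herm[OF assms] by (simp add: msimps)
  also have "\<dots> = (c * chi ws ps) \<cdot>\<^sub>m tensor_list ps"
    using tl_conj[OF assms c(2)] cdims[OF W] cdims[OF Pc] by (simp add: msimps)
  finally show "tensor_list ws * P * dagger (tensor_list ws) \<in> pauli_group n"
    using pg_smult[OF G4_mult[OF c(1) chi_G4] T_pg[OF c(2)]] by simp
qed

lemma cliff_mult: assumes "U \<in> clifford n" "V \<in> clifford n" shows "U * V \<in> clifford n"
proof (rule cliffI)
  note U = cliffD[OF assms(1)] and V = cliffD[OF assms(2)]
  show "U * V \<in> carrier_mat (2^n) (2^n)" using U V by simp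
  have dU: "dagger U \<in> carrier_mat (2^n) (2^n)" "dagger V \<in> carrier_mat (2^n) (2^n)"
    using U V dagger_carrier by auto
  have "dagger (U * V) * (U * V) = (dagger V * dagger U) * (U * V)"
    using U V by (simp add: dagger_mult[of _ "2^n" "2^n" _ "2^n"])
  also have "\<dots> = dagger V * (dagger U * (U * V))"
    by (rule assoc_mult_mat[OF dU(2) dU(1) mult_carrier_mat[OF U(1) V(1)]])
  also have "dagger U * (U * V) = (dagger U * U) * V"
    by (rule assoc_mult_mat[OF dU(1) U(1) V(1), symmetric])
  finally show "dagger (U * V) * (U * V) = 1\<^sub>m (2^n)" using U V by simp
  fix P assume P: "P \<in> pauli_group n"
  have "U * V * P * dagger (U * V) = U * (V * P * dagger V) * dagger U"
    using U V cdims[OF U(1)] cdims[OF V(1)] cdims[OF pg_carrier[OF P]]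
    by (simp add: dagger_mult[of _ "2^n" "2^n" _ "2^n"] msimps)
  then show "U * V * P * dagger (U * V) \<in> pauli_group n" using U(4)[OF V(4)[OF P]] by simp
qed

lemma cliff_phase: assumes "U \<in> clifford n" "cmod c = 1" shows "c \<cdot>\<^sub>m U \<in> clifford n"
proof (rule cliffI)
  note U = cliffD[OF assms(1)]
  show "c \<cdot>\<^sub>m U \<in> carrier_mat (2^n) (2^n)" using U by simp
  show "dagger (c \<cdot>\<^sub>m U) * (c \<cdot>\<^sub>m U) = 1\<^sub>m (2^n)"
    using U cnj_self[OF assms(2)] cdims[OF U(1)]
    by (simp add: dagger_smult msimps one_smult_mat mult.commute)
  fix P assume P: "P \<in> pauli_group n"
  have "c \<cdot>\<^sub>m U * P * dagger (c \<cdot>\<^sub>m U) = (c * cnj c) \<cdot>\<^sub>m (U * P * dagger U)"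
    using U cdims[OF U(1)] cdims[OF pg_carrier[OF P]]
    by (simp add: dagger_smult msimps mult.commute)
  then show "c \<cdot>\<^sub>m U * P * dagger (c \<cdot>\<^sub>m U) \<in> pauli_group n"
    using U(4)[OF P] cnj_self[OF assms(2)] by (simp add: mult.commute one_smult_mat)
qed

lemma sandwich:
  fixes A B M K :: "complex mat"
  assumes c: "A \<in> carrier_mat N N" "B \<in> carrier_mat N N" "M \<in> carrier_mat N N" "K \<in> carrier_mat N N"
    and h: "A * M * A = x \<cdot>\<^sub>m M" "B * M * B = y \<cdot>\<^sub>m M" "A * M * B = x \<cdot>\<^sub>m K" "B * M * A = (-y) \<cdot>\<^sub>m K"
  shows "(s \<cdot>\<^sub>m (A + B)) * M * (s \<cdot>\<^sub>m (A + B)) = (s*s) \<cdot>\<^sub>m ((x+y) \<cdot>\<^sub>m M + (x-y) \<cdot>\<^sub>m K)"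
proof -
  have "(s \<cdot>\<^sub>m (A + B)) * M * (s \<cdot>\<^sub>m (A + B)) = (s*s) \<cdot>\<^sub>m ((A + B) * M * (A + B))"
    using cdims[OF c(1)] cdims[OF c(2)] cdims[OF c(3)] by (simp add: smult_mult_l smult_mult_r smult_smult_mat)
  also have "(A + B) * M * (A + B) = A * M * A + A * M * B + (B * M * A + B * M * B)"
  proof -
    have "(A + B) * M * (A + B) = A * M * A + B * M * A + (A * M * B + B * M * B)"
      using c by (simp add: add_mult_distrib_mat[of _ N N] mult_add_distrib_mat[of _ N N])
    also have "\<dots> = A * M * A + A * M * B + (B * M * A + B * M * B)"
      by (rule eq_matI) (use c in \<open>simp_all add: add_ac\<close>)
    finally show ?thesis .
  qed
  also have "\<dots> = (x+y) \<cdot>\<^sub>m M + (x-y) \<cdot>\<^sub>m K"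
    unfolding h by (rule eq_matI) (use c in \<open>auto simp: algebra_simps\<close>)
  finally show ?thesis .
qed

definition gate :: "complex mat list \<Rightarrow> complex mat list \<Rightarrow> complex mat" where
  "gate a b = complex_of_real (1 / sqrt 2) \<cdot>\<^sub>m (tensor_list a + tensor_list b)"

lemma half: "complex_of_real (1 / sqrt 2) * complex_of_real (1 / sqrt 2) = 1/2"
  by (simp flip: of_real_mult)

lemma chi_sym: assumes "a \<in> LL n" "b \<in> LL n" shows "chi a b = chi b a"
  using assms by (simp add: chi_def chi1_sym LL_len)

context
  fixes n a b
  assumes a: "a \<in> LL n" and b: "b \<in> LL n" and ab: "chi a b = -1"
begin

private lemma la: "length a = n" using LL_len[OF a] .
private lemma lb: "length b = n" using LL_len[OF b] .
private lemma ba: "chi b a = -1" using chi_sym[OF a b] ab by simp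

private lemma cA: "tensor_list a \<in> carrier_mat (2^n) (2^n)" using LL_tl_carrier[OF a] .
private lemma cB: "tensor_list b \<in> carrier_mat (2^n) (2^n)" using LL_tl_carrier[OF b] .

lemma gate_carrier: "gate a b \<in> carrier_mat (2^n) (2^n)"
  unfolding gate_def using cA cB by simp

lemma gate_herm: "dagger (gate a b) = gate a b"
  unfolding gate_def using cA cB by (simp add: dagger_smult dagger_add tl_herm[OF a] tl_herm[OF b])

lemma BA: "tensor_list b * tensor_list a = (-1) \<cdot>\<^sub>m (tensor_list a * tensor_list b)"
  using tl_comm[OF b a] chi_sym[OF a b] ab by simp

lemma gate_sandwich:
  assumes M: "M \<in> carrier_mat (2^n) (2^n)" "K \<in> carrier_mat (2^n) (2^n)"
    and h: "tensor_list a * M * tensor_list a = x \<cdot>\<^sub>m M" "tensor_list b * M * tensor_list b = y \<cdot>\<^sub>m M"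
      "tensor_list a * M * tensor_list b = x \<cdot>\<^sub>m K" "tensor_list b * M * tensor_list a = (-y) \<cdot>\<^sub>m K"
  shows "gate a b * M * gate a b = (1/2) \<cdot>\<^sub>m ((x+y) \<cdot>\<^sub>m M + (x-y) \<cdot>\<^sub>m K)"
  unfolding gate_def using sandwich[OF cA cB M h] half by simp

lemma gate_sq: "gate a b * gate a b = 1\<^sub>m (2^n)"
proof -
  have one: "tensor_list a * 1\<^sub>m (2^n) * tensor_list a = 1 \<cdot>\<^sub>m 1\<^sub>m (2^n)"
    "tensor_list b * 1\<^sub>m (2^n) * tensor_list b = 1 \<cdot>\<^sub>m 1\<^sub>m (2^n)"
    "tensor_list a * 1\<^sub>m (2^n) * tensor_list b = 1 \<cdot>\<^sub>m (tensor_list a * tensor_list b)"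
    "tensor_list b * 1\<^sub>m (2^n) * tensor_list a = (-1) \<cdot>\<^sub>m (tensor_list a * tensor_list b)"
    using cA cB tl_sq[OF a] tl_sq[OF b] BA LL_len[OF a] LL_len[OF b] by (simp_all add: one_smult_mat)
  have "gate a b * 1\<^sub>m (2^n) * gate a b = (1/2) \<cdot>\<^sub>m ((1+1) \<cdot>\<^sub>m 1\<^sub>m (2^n) + (1-1) \<cdot>\<^sub>m (tensor_list a * tensor_list b))"
    using gate_sandwich[OF one_carrier_mat mult_carrier_mat[OF cA cB] one] .
  also have "\<dots> = 1\<^sub>m (2^n)"
    by (rule eq_matI) (use cA cB la lb in auto)
  finally show ?thesis using gate_carrier by simp
qed

lemma gate_conj: "gate a b * tensor_list a * gate a b = tensor_list b"
proof -
  have h: "tensor_list a * tensor_list a * tensor_list a = 1 \<cdot>\<^sub>m tensor_list a"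
    "tensor_list b * tensor_list a * tensor_list b = (-1) \<cdot>\<^sub>m tensor_list a"
    "tensor_list a * tensor_list a * tensor_list b = 1 \<cdot>\<^sub>m tensor_list b"
    "tensor_list b * tensor_list a * tensor_list a = (- (-1)) \<cdot>\<^sub>m tensor_list b"
    using tl_conj[OF b a] ba tl_sq[OF a] cA cB la lb
    by (simp_all add: one_smult_mat assoc_mult_mat[OF cB cA cA])
  have "gate a b * tensor_list a * gate a b = (1/2) \<cdot>\<^sub>m ((1+(-1)) \<cdot>\<^sub>m tensor_list a + (1-(-1)) \<cdot>\<^sub>m tensor_list b)"
    by (rule gate_sandwich[OF cA cB h])
  also have "\<dots> = tensor_list b"
    by (rule eq_matI) (use cA cB la lb in auto)
  finally show ?thesis .
qed

lemma gate_pauli: assumes p: "p \<in> LL n"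
  shows "gate a b * tensor_list p * gate a b \<in> pauli_group n"
proof -
  let ?A = "tensor_list a" and ?B = "tensor_list b" and ?M = "tensor_list p"
  let ?x = "chi a p" and ?y = "chi b p"
  have cM: "?M \<in> carrier_mat (2^n) (2^n)" using LL_tl_carrier[OF p] .
  note d = cdims[OF cA] cdims[OF cB] cdims[OF cM]
  have h1: "?A * ?M * ?A = ?x \<cdot>\<^sub>m ?M" by (rule tl_conj[OF a p])
  have h2: "?B * ?M * ?B = ?y \<cdot>\<^sub>m ?M" by (rule tl_conj[OF b p])
  have h3: "?A * ?M * ?B = ?x \<cdot>\<^sub>m (?M * ?A * ?B)"
    using tl_comm[OF a p] d by (simp add: smult_mult_l)
  have "?B * ?M * ?A = ?y \<cdot>\<^sub>m (?M * (?B * ?A))"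
    using tl_comm[OF b p] d by (simp add: smult_mult_l assoc_dims)
  also have "\<dots> = (-?y) \<cdot>\<^sub>m (?M * ?A * ?B)"
    using BA d by (simp add: smult_mult_r smult_smult_mat assoc_dims)
  finally have h4: "?B * ?M * ?A = (-?y) \<cdot>\<^sub>m (?M * ?A * ?B)" .
  have e: "gate a b * ?M * gate a b = (1/2) \<cdot>\<^sub>m ((?x+?y) \<cdot>\<^sub>m ?M + (?x-?y) \<cdot>\<^sub>m (?M * ?A * ?B))"
    by (rule gate_sandwich[OF cM _ h1 h2 h3 h4]) (use cM cA cB in simp)
  have MAB: "?M * ?A * ?B \<in> pauli_group n"
    using pg_mult[OF pg_mult[OF T_pg[OF p] T_pg[OF a]] T_pg[OF b]] .
  from chi_pm[of a p] chi_pm[of b p] consider "?x = ?y" | "?y = - ?x" by fastforce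
  then show ?thesis
  proof cases
    case 1
    have "gate a b * ?M * gate a b = ?x \<cdot>\<^sub>m ?M"
      unfolding e 1 by (rule eq_matI) (use cM cA cB la lb LL_len[OF p] in auto)
    then show ?thesis using pg_smult[OF chi_G4 T_pg[OF p]] 1 by simp
  next
    case 2
    have "gate a b * ?M * gate a b = ?x \<cdot>\<^sub>m (?M * ?A * ?B)"
      unfolding e 2 by (rule eq_matI) (use cM cA cB la lb LL_len[OF p] in auto)
    then show ?thesis using pg_smult[OF chi_G4 MAB] by simp
  qed
qed

lemma gate_cliff: "gate a b \<in> clifford n"
proof (rule cliffI)
  show "gate a b \<in> carrier_mat (2^n) (2^n)" by (rule gate_carrier)
  show "dagger (gate a b) * gate a b = 1\<^sub>m (2^n)" by (simp add: gate_herm gate_sq)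
  fix P assume "P \<in> pauli_group n"
  then obtain c ps where c: "c \<in> G4" "ps \<in> LL n" "P = c \<cdot>\<^sub>m tensor_list ps" unfolding pg_iff by blast
  have cP: "tensor_list ps \<in> carrier_mat (2^n) (2^n)" using LL_tl_carrier[OF c(2)] .
  have "gate a b * P * dagger (gate a b) = c \<cdot>\<^sub>m (gate a b * tensor_list ps * gate a b)"
    using c cdims[OF cP] cdims[OF gate_carrier] by (simp add: gate_herm smult_mult_l smult_mult_r)
  then show "gate a b * P * dagger (gate a b) \<in> pauli_group n"
    using pg_smult[OF c(1) gate_pauli[OF c(2)]] by simp
qed

end

lemma mult_entry: assumes "A \<in> carrier_mat N N" "B \<in> carrier_mat N N" "i < N" "j < N"
  shows "(A * B) $$ (i,j) = (\<Sum>k<N. A $$ (i,k) * B $$ (k,j))"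
  using assms by (simp add: scalar_prod_def atLeast0LessThan)

lemma triple_entry: assumes "A \<in> carrier_mat N N" "B \<in> carrier_mat N N" "C \<in> carrier_mat N N" "i < N" "j < N"
  shows "(A * B * C) $$ (i,j) = (\<Sum>c<N. \<Sum>d<N. A $$ (i,c) * B $$ (c,d) * C $$ (d,j))"
proof -
  have "(A * B * C) $$ (i,j) = (\<Sum>d<N. (A * B) $$ (i,d) * C $$ (d,j))"
    using assms by (intro mult_entry) auto
  also have "\<dots> = (\<Sum>d<N. (\<Sum>c<N. A $$ (i,c) * B $$ (c,d)) * C $$ (d,j))"
    using assms by (intro sum.cong refl) (simp del: index_mult_mat add: mult_entry)
  also have "\<dots> = (\<Sum>d<N. \<Sum>c<N. A $$ (i,c) * B $$ (c,d) * C $$ (d,j))"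
    by (simp add: sum_distrib_right)
  also have "\<dots> = (\<Sum>c<N. \<Sum>d<N. A $$ (i,c) * B $$ (c,d) * C $$ (d,j))"
    by (rule sum.swap)
  finally show ?thesis .
qed

definition qv :: "nat \<Rightarrow> complex mat \<Rightarrow> complex mat \<Rightarrow> complex" where
  "qv x U M = (U * M * dagger U) $$ (x,x)"

lemma qv_entry: assumes "U \<in> carrier_mat N N" "M \<in> carrier_mat N N" "x < N"
  shows "qv x U M = (\<Sum>i<N. \<Sum>j<N. U $$ (x,i) * M $$ (i,j) * cnj (U $$ (x,j)))"
  unfolding qv_def using assms by (subst triple_entry[of _ N]) (auto intro: dagger_carrier)

lemma swap4:
  "(\<Sum>p\<in>A. \<Sum>i\<in>I. \<Sum>j\<in>J. \<Sum>k\<in>K. \<Sum>l\<in>L. F p i j k l) = (\<Sum>i\<in>I. \<Sum>j\<in>J. \<Sum>k\<in>K. \<Sum>l\<in>L. \<Sum>p\<in>A. F p i j k l)"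
proof -
  have "(\<Sum>p\<in>A. \<Sum>i\<in>I. \<Sum>j\<in>J. \<Sum>k\<in>K. \<Sum>l\<in>L. F p i j k l) = (\<Sum>i\<in>I. \<Sum>p\<in>A. \<Sum>j\<in>J. \<Sum>k\<in>K. \<Sum>l\<in>L. F p i j k l)"
    by (rule sum.swap)
  also have "\<dots> = (\<Sum>i\<in>I. \<Sum>j\<in>J. \<Sum>p\<in>A. \<Sum>k\<in>K. \<Sum>l\<in>L. F p i j k l)"
    by (rule sum.cong[OF refl], rule sum.swap)
  also have "\<dots> = (\<Sum>i\<in>I. \<Sum>j\<in>J. \<Sum>k\<in>K. \<Sum>p\<in>A. \<Sum>l\<in>L. F p i j k l)"
    by (rule sum.cong[OF refl], rule sum.cong[OF refl], rule sum.swap)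
  also have "\<dots> = (\<Sum>i\<in>I. \<Sum>j\<in>J. \<Sum>k\<in>K. \<Sum>l\<in>L. \<Sum>p\<in>A. F p i j k l)"
    by (rule sum.cong[OF refl], rule sum.cong[OF refl], rule sum.cong[OF refl], rule sum.swap)
  finally show ?thesis .
qed

lemma swap22:
  "(\<Sum>i\<in>I. \<Sum>j\<in>J. \<Sum>c\<in>C. \<Sum>d\<in>D. f i j c d) = (\<Sum>c\<in>C. \<Sum>d\<in>D. \<Sum>i\<in>I. \<Sum>j\<in>J. f i j c d)"
proof -
  have "(\<Sum>i\<in>I. \<Sum>j\<in>J. \<Sum>c\<in>C. \<Sum>d\<in>D. f i j c d) = (\<Sum>i\<in>I. \<Sum>c\<in>C. \<Sum>j\<in>J. \<Sum>d\<in>D. f i j c d)"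
    by (rule sum.cong[OF refl], rule sum.swap)
  also have "\<dots> = (\<Sum>c\<in>C. \<Sum>i\<in>I. \<Sum>j\<in>J. \<Sum>d\<in>D. f i j c d)"
    by (rule sum.swap)
  also have "\<dots> = (\<Sum>c\<in>C. \<Sum>i\<in>I. \<Sum>d\<in>D. \<Sum>j\<in>J. f i j c d)"
    by (rule sum.cong[OF refl], rule sum.cong[OF refl], rule sum.swap)
  also have "\<dots> = (\<Sum>c\<in>C. \<Sum>d\<in>D. \<Sum>i\<in>I. \<Sum>j\<in>J. f i j c d)"
    by (rule sum.cong[OF refl], rule sum.swap)
  finally show ?thesis .
qed

definition lf :: "nat \<Rightarrow> (nat \<Rightarrow> nat \<Rightarrow> complex) \<Rightarrow> complex mat list \<Rightarrow> complex" where
  "lf n \<alpha> P = (\<Sum>i<2^n. \<Sum>j<2^n. \<alpha> i j * tensor_list P $$ (i,j))"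

lemma sum_if_delta2:
  fixes g :: "nat \<Rightarrow> nat \<Rightarrow> complex"
  assumes "i < N" "k < N"
  shows "(\<Sum>j<N. \<Sum>l<N. if i = l \<and> j = k then g j l else 0) = g k i"
proof -
  have "(\<Sum>j<N. \<Sum>l<N. if i = l \<and> j = k then g j l else 0) = (\<Sum>j<N. if j = k then g j i else 0)"
    using assms by (intro sum.cong refl) (auto simp: if_distrib cong: if_cong)
  also have "\<dots> = g k i" using assms by simp
  finally show ?thesis .
qed

lemma contraction:
  "(\<Sum>P\<in>LL n. lf n \<alpha> P * lf n \<beta> P) = 2^n * (\<Sum>i<2^n. \<Sum>j<2^n. \<alpha> i j * \<beta> j i)"
proof -
  let ?N = "2^n :: nat"
  have "(\<Sum>P\<in>LL n. lf n \<alpha> P * lf n \<beta> P)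
      = (\<Sum>P\<in>LL n. \<Sum>i<?N. \<Sum>k<?N. \<Sum>j<?N. \<Sum>l<?N. (\<alpha> i j * \<beta> k l) * (tensor_list P $$ (i,j) * tensor_list P $$ (k,l)))"
    unfolding lf_def sum_product by (simp only: ac_simps)
  also have "\<dots> = (\<Sum>i<?N. \<Sum>k<?N. \<Sum>j<?N. \<Sum>l<?N. \<Sum>P\<in>LL n. (\<alpha> i j * \<beta> k l) * (tensor_list P $$ (i,j) * tensor_list P $$ (k,l)))"
    by (rule swap4)
  also have "\<dots> = (\<Sum>i<?N. \<Sum>k<?N. \<Sum>j<?N. \<Sum>l<?N. (\<alpha> i j * \<beta> k l) * (if i = l \<and> j = k then of_nat ?N else 0))"
    by (intro sum.cong refl) (simp add: sum_distrib_left[symmetric] compl)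
  also have "\<dots> = (\<Sum>i<?N. \<Sum>k<?N. of_nat ?N * (\<alpha> i k * \<beta> k i))"
  proof (intro sum.cong refl)
    fix i k assume "i \<in> {..<?N}" "k \<in> {..<?N}"
    then have ik: "i < ?N" "k < ?N" by auto
    have "(\<Sum>j<?N. \<Sum>l<?N. (\<alpha> i j * \<beta> k l) * (if i = l \<and> j = k then of_nat ?N else 0))
        = (\<Sum>j<?N. \<Sum>l<?N. if i = l \<and> j = k then of_nat ?N * (\<alpha> i j * \<beta> k l) else 0)"
      by (intro sum.cong refl) auto
    also have "\<dots> = of_nat ?N * (\<alpha> i k * \<beta> k i)"
      by (rule sum_if_delta2[OF ik, where g = "\<lambda>j l. of_nat ?N * (\<alpha> i j * \<beta> k l)"])
    finally show "(\<Sum>j<?N. \<Sum>l<?N. (\<alpha> i j * \<beta> k l) * (if i = l \<and> j = k then of_nat ?N else 0))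
        = of_nat ?N * (\<alpha> i k * \<beta> k i)" .
  qed
  also have "\<dots> = 2^n * (\<Sum>i<2^n. \<Sum>j<2^n. \<alpha> i j * \<beta> j i)"
    by (simp add: sum_distrib_left)
  finally show ?thesis .
qed

definition rr :: "nat \<Rightarrow> complex mat \<Rightarrow> complex mat list \<Rightarrow> complex" where
  "rr n \<rho> P = lf n (\<lambda>c d. \<rho> $$ (d,c)) P"

definition gam :: "nat \<Rightarrow> nat \<Rightarrow> complex mat \<Rightarrow> complex mat list \<Rightarrow> nat \<Rightarrow> nat \<Rightarrow> complex" where
  "gam n x U W c d = (\<Sum>i<2^n. \<Sum>j<2^n. U $$ (x,i) * cnj (U $$ (x,j)) * tensor_list W $$ (i,c) * tensor_list W $$ (d,j))"

lemma qv_smult: assumes "U \<in> carrier_mat N N" "M \<in> carrier_mat N N" "x < N"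
  shows "qv x U (c \<cdot>\<^sub>m M) = c * qv x U M"
  using assms by (simp add: qv_entry[of _ N] sum_distrib_left ac_simps)

lemma qv_sandW: assumes U: "U \<in> carrier_mat (2^n) (2^n)" and M: "M \<in> carrier_mat (2^n) (2^n)"
  and W: "W \<in> LL n" and x: "x < 2^n"
  shows "qv x U (tensor_list W * M * tensor_list W) = (\<Sum>c<2^n. \<Sum>d<2^n. gam n x U W c d * M $$ (c,d))"
proof -
  let ?N = "2^n::nat"
  have cW: "tensor_list W \<in> carrier_mat ?N ?N" using LL_tl_carrier[OF W] .
  have cP: "tensor_list W * M * tensor_list W \<in> carrier_mat ?N ?N" using cW M by simp
  have "qv x U (tensor_list W * M * tensor_list W)
     = (\<Sum>i<?N. \<Sum>j<?N. U $$ (x,i) * (tensor_list W * M * tensor_list W) $$ (i,j) * cnj (U $$ (x,j)))"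
    by (rule qv_entry[OF U cP x])
  also have "\<dots> = (\<Sum>i<?N. \<Sum>j<?N. U $$ (x,i) * (\<Sum>c<?N. \<Sum>d<?N. tensor_list W $$ (i,c) * M $$ (c,d) * tensor_list W $$ (d,j)) * cnj (U $$ (x,j)))"
    by (intro sum.cong refl) (simp del: assoc_mult_mat add: triple_entry[OF cW M cW])
  also have "\<dots> = (\<Sum>i<?N. \<Sum>j<?N. \<Sum>c<?N. \<Sum>d<?N. (U $$ (x,i) * cnj (U $$ (x,j)) * tensor_list W $$ (i,c) * tensor_list W $$ (d,j)) * M $$ (c,d))"
    by (simp add: sum_distrib_left sum_distrib_right ac_simps)
  also have "\<dots> = (\<Sum>c<?N. \<Sum>d<?N. \<Sum>i<?N. \<Sum>j<?N. (U $$ (x,i) * cnj (U $$ (x,j)) * tensor_list W $$ (i,c) * tensor_list W $$ (d,j)) * M $$ (c,d))"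
    by (rule swap22)
  also have "\<dots> = (\<Sum>c<?N. \<Sum>d<?N. gam n x U W c d * M $$ (c,d))"
    unfolding gam_def by (simp add: sum_distrib_right)
  finally show ?thesis .
qed

lemma qv_lf: assumes U: "U \<in> carrier_mat (2^n) (2^n)" and P: "P \<in> LL n" and x: "x < 2^n"
  shows "qv x U (tensor_list P) = lf n (\<lambda>i j. U $$ (x,i) * cnj (U $$ (x,j))) P"
  unfolding lf_def using qv_entry[OF U LL_tl_carrier[OF P] x]
  by (simp add: ac_simps)

lemma chi_qv_lf: assumes U: "U \<in> carrier_mat (2^n) (2^n)" and P: "P \<in> LL n" and W: "W \<in> LL n" and x: "x < 2^n"
  shows "chi W P * qv x U (tensor_list P) = lf n (gam n x U W) P"
proof -
  have "chi W P * qv x U (tensor_list P) = qv x U (chi W P \<cdot>\<^sub>m tensor_list P)"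
    by (rule qv_smult[OF U LL_tl_carrier[OF P] x, symmetric])
  also have "\<dots> = qv x U (tensor_list W * tensor_list P * tensor_list W)"
    by (simp add: tl_conj[OF W P])
  also have "\<dots> = lf n (gam n x U W) P"
    unfolding lf_def by (rule qv_sandW[OF U LL_tl_carrier[OF P] W x])
  finally show ?thesis .
qed

lemma L1: assumes U: "U \<in> carrier_mat (2^n) (2^n)" and R: "\<rho> \<in> carrier_mat (2^n) (2^n)"
  and W: "W \<in> LL n" and x: "x < 2^n"
  shows "(\<Sum>P\<in>LL n. rr n \<rho> P * (chi W P * qv x U (tensor_list P))) = 2^n * qv x U (tensor_list W * \<rho> * tensor_list W)"
proof -
  have "(\<Sum>P\<in>LL n. rr n \<rho> P * (chi W P * qv x U (tensor_list P))) = (\<Sum>P\<in>LL n. lf n (\<lambda>c d. \<rho> $$ (d,c)) P * lf n (gam n x U W) P)"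
    by (intro sum.cong refl) (simp add: rr_def chi_qv_lf[OF U _ W x])
  also have "\<dots> = 2^n * (\<Sum>c<2^n. \<Sum>d<2^n. \<rho> $$ (d,c) * gam n x U W d c)"
    by (rule contraction)
  also have "(\<Sum>c<2^n. \<Sum>d<2^n. \<rho> $$ (d,c) * gam n x U W d c) = (\<Sum>d<2^n. \<Sum>c<2^n. gam n x U W d c * \<rho> $$ (d,c))"
    by (subst sum.swap) (simp add: ac_simps)
  also have "\<dots> = qv x U (tensor_list W * \<rho> * tensor_list W)"
    by (rule qv_sandW[OF U R W x, symmetric])
  finally show ?thesis .
qed

lemma chi_I: "chi W (replicate n pauliI) = 1"
  unfolding chi_def by (simp add: chi1_I)

lemma sum_chi: assumes "P \<in> LL n" shows "(\<Sum>W\<in>LL n. chi W P) = (if P = replicate n pauliI then 4^n else 0)"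
  using chi_orth[OF assms I_LL] by (simp add: chi_I)

lemma twirl1: assumes U: "U \<in> carrier_mat (2^n) (2^n)" and R: "\<rho> \<in> carrier_mat (2^n) (2^n)" and x: "x < 2^n"
  shows "(\<Sum>W\<in>LL n. qv x U (tensor_list W * \<rho> * tensor_list W))
       = 2^n * rr n \<rho> (replicate n pauliI) * qv x U (tensor_list (replicate n pauliI))"
proof -
  let ?I = "replicate n pauliI"
  have D: "(2::complex)^n \<noteq> 0" by simp
  have "(2::complex)^n * (\<Sum>W\<in>LL n. qv x U (tensor_list W * \<rho> * tensor_list W))
      = (\<Sum>W\<in>LL n. \<Sum>P\<in>LL n. rr n \<rho> P * qv x U (tensor_list P) * chi W P)"
    by (simp add: sum_distrib_left L1[OF U R _ x, symmetric] ac_simps)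
  also have "\<dots> = (\<Sum>P\<in>LL n. rr n \<rho> P * qv x U (tensor_list P) * (\<Sum>W\<in>LL n. chi W P))"
    by (subst sum.swap) (simp add: sum_distrib_left)
  also have "\<dots> = (\<Sum>P\<in>LL n. if P = ?I then rr n \<rho> P * qv x U (tensor_list P) * 4^n else 0)"
    by (intro sum.cong refl) (simp add: sum_chi)
  also have "\<dots> = rr n \<rho> ?I * qv x U (tensor_list ?I) * 4^n"
    by (simp add: finite_LL I_LL)
  finally have "(2::complex)^n * (\<Sum>W\<in>LL n. qv x U (tensor_list W * \<rho> * tensor_list W)) = rr n \<rho> ?I * qv x U (tensor_list ?I) * 4^n" .
  moreover have "(4::complex)^n = 2^n * 2^n" by (simp add: power_mult_distrib[symmetric])
  ultimately show ?thesis using D by (simp add: ac_simps)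
qed

lemma twirl2: assumes U: "U \<in> carrier_mat (2^n) (2^n)" and R: "\<rho> \<in> carrier_mat (2^n) (2^n)" and x: "x < 2^n"
  shows "(\<Sum>W\<in>LL n. (qv x U (tensor_list W * \<rho> * tensor_list W))^2)
       = (\<Sum>P\<in>LL n. (rr n \<rho> P)^2 * (qv x U (tensor_list P))^2)"
proof -
  let ?a = "\<lambda>P. rr n \<rho> P * qv x U (tensor_list P)"
  have D: "(4::complex)^n \<noteq> 0" by simp
  have 4: "(4::complex)^n = 2^n * 2^n" by (simp add: power_mult_distrib[symmetric])
  have "(4::complex)^n * (\<Sum>W\<in>LL n. (qv x U (tensor_list W * \<rho> * tensor_list W))^2)
      = (\<Sum>W\<in>LL n. (2^n * qv x U (tensor_list W * \<rho> * tensor_list W)) * (2^n * qv x U (tensor_list W * \<rho> * tensor_list W)))"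
    by (simp add: sum_distrib_left 4 power2_eq_square ac_simps)
  also have "\<dots> = (\<Sum>W\<in>LL n. (\<Sum>P\<in>LL n. ?a P * chi W P) * (\<Sum>Q\<in>LL n. ?a Q * chi W Q))"
    by (simp add: L1[OF U R _ x, symmetric] ac_simps)
  also have "\<dots> = (\<Sum>W\<in>LL n. \<Sum>P\<in>LL n. \<Sum>Q\<in>LL n. ?a P * ?a Q * (chi W P * chi W Q))"
    by (simp add: sum_product ac_simps)
  also have "\<dots> = (\<Sum>P\<in>LL n. \<Sum>Q\<in>LL n. ?a P * ?a Q * (\<Sum>W\<in>LL n. chi W P * chi W Q))"
  proof -
    have "(\<Sum>W\<in>LL n. \<Sum>P\<in>LL n. \<Sum>Q\<in>LL n. ?a P * ?a Q * (chi W P * chi W Q))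
        = (\<Sum>P\<in>LL n. \<Sum>W\<in>LL n. \<Sum>Q\<in>LL n. ?a P * ?a Q * (chi W P * chi W Q))"
      by (rule sum.swap)
    also have "\<dots> = (\<Sum>P\<in>LL n. \<Sum>Q\<in>LL n. \<Sum>W\<in>LL n. ?a P * ?a Q * (chi W P * chi W Q))"
      by (rule sum.cong[OF refl], rule sum.swap)
    finally show ?thesis by (simp add: sum_distrib_left)
  qed
  also have "\<dots> = (\<Sum>P\<in>LL n. \<Sum>Q\<in>LL n. if P = Q then ?a P * ?a Q * 4^n else 0)"
    by (intro sum.cong refl) (simp add: chi_orth)
  also have "\<dots> = (\<Sum>P\<in>LL n. ?a P * ?a P * 4^n)"
    by (intro sum.cong refl) (simp add: finite_LL)
  also have "\<dots> = 4^n * (\<Sum>P\<in>LL n. (rr n \<rho> P)^2 * (qv x U (tensor_list P))^2)"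
    by (simp add: sum_distrib_left power2_eq_square ac_simps)
  finally show ?thesis using D by simp
qed

lemma sum_sq_factor: "(\<Sum>i<N. \<Sum>j<N. a i * b j * (a j * b i)) = (\<Sum>i<N. a i * b i) * (\<Sum>i<N. a i * (b i :: complex))"
  by (simp add: sum_product ac_simps)

lemma sumq: assumes U: "U \<in> carrier_mat (2^n) (2^n)" and x: "x < 2^n"
  shows "(\<Sum>P\<in>LL n. (qv x U (tensor_list P))^2) = 2^n * ((U * dagger U) $$ (x,x))^2"
proof -
  let ?\<alpha> = "\<lambda>i j. U $$ (x,i) * cnj (U $$ (x,j))"
  have "(\<Sum>P\<in>LL n. (qv x U (tensor_list P))^2) = (\<Sum>P\<in>LL n. lf n ?\<alpha> P * lf n ?\<alpha> P)"
    by (intro sum.cong refl) (simp add: qv_lf[OF U _ x] power2_eq_square)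
  also have "\<dots> = 2^n * (\<Sum>i<2^n. \<Sum>j<2^n. ?\<alpha> i j * ?\<alpha> j i)" by (rule contraction)
  also have "(\<Sum>i<2^n. \<Sum>j<2^n. ?\<alpha> i j * ?\<alpha> j i) = ((U * dagger U) $$ (x,x))^2"
  proof -
    have "(U * dagger U) $$ (x,x) = (\<Sum>i<2^n. U $$ (x,i) * cnj (U $$ (x,i)))"
      using U x by (simp del: index_mult_mat add: mult_entry[OF U dagger_carrier[OF U]])
    then show ?thesis by (simp add: power2_eq_square sum_sq_factor[symmetric])
  qed
  finally show ?thesis .
qed

lemma parseval: "(\<Sum>P\<in>LL n. (rr n \<rho> P)^2) = 2^n * (\<Sum>c<2^n. \<Sum>d<2^n. \<rho> $$ (d,c) * \<rho> $$ (c,d))"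
  unfolding rr_def power2_eq_square by (rule contraction)

lemma rr_I: "rr n \<rho> (replicate n pauliI) = (\<Sum>c<2^n. \<rho> $$ (c,c))"
proof -
  have "rr n \<rho> (replicate n pauliI) = (\<Sum>c<2^n. \<Sum>d<2^n. if c = d then \<rho> $$ (d,c) else 0)"
    unfolding rr_def lf_def tl_one by (intro sum.cong refl) auto
  also have "\<dots> = (\<Sum>c<2^n. \<rho> $$ (c,c))" by simp
  finally show ?thesis .
qed

lemma qv_I: assumes "U \<in> carrier_mat (2^n) (2^n)" "U * dagger U = 1\<^sub>m (2^n)" "x < 2^n"
  shows "qv x U (tensor_list (replicate n pauliI)) = 1"
  using assms unfolding qv_def tl_one by simp

lemma phase_relE: "(U,V) \<in> phase_rel n \<Longrightarrow> U \<in> clifford n \<and> V \<in> clifford n \<and> (\<exists>c. cmod c = 1 \<and> V = c \<cdot>\<^sub>m U)"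
  unfolding phase_rel_def by auto

lemma phase_relI: "U \<in> clifford n \<Longrightarrow> cmod c = 1 \<Longrightarrow> (U, c \<cdot>\<^sub>m U) \<in> phase_rel n"
  unfolding phase_rel_def using cliff_phase by auto

lemma rel_equiv: "equiv (clifford n) (phase_rel n)"
proof (rule equivI)
  show "phase_rel n \<subseteq> clifford n \<times> clifford n" unfolding phase_rel_def by auto
  show "refl_on (clifford n) (phase_rel n)"
  proof (rule refl_onI)
    fix U assume "U \<in> clifford n"
    then show "(U, U) \<in> phase_rel n" using phase_relI[of U n 1] by (simp add: one_smult_mat)
  qed
  show "sym (phase_rel n)"
  proof (rule symI)
    fix U V assume "(U, V) \<in> phase_rel n"
    then obtain c where c: "U \<in> clifford n" "V \<in> clifford n" "cmod c = 1" "V = c \<cdot>\<^sub>m U" using phase_relE by blast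
    then have "U = cnj c \<cdot>\<^sub>m V" using cnj_self[OF c(3)] by (simp add: smult_smult_mat one_smult_mat)
    then show "(V, U) \<in> phase_rel n" using phase_relI[OF c(2), of "cnj c"] c by simp
  qed
  show "trans (phase_rel n)"
  proof (rule transI)
    fix U V W assume "(U, V) \<in> phase_rel n" "(V, W) \<in> phase_rel n"
    then obtain c d where c: "U \<in> clifford n" "cmod c = 1" "V = c \<cdot>\<^sub>m U" "cmod d = 1" "W = d \<cdot>\<^sub>m V"
      using phase_relE by blast
    then have "W = (d * c) \<cdot>\<^sub>m U" by (simp add: smult_smult_mat)
    moreover have "cmod (d * c) = 1" using c by (simp add: norm_mult)
    ultimately show "(U, W) \<in> phase_rel n" using phase_relI[OF c(1)] by simp
  qed
qed

definition rep :: "complex mat set \<Rightarrow> complex mat" where "rep C = (SOME U. U \<in> C)"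

lemma rep_props: assumes "C \<in> clifford_mod_phase n"
  shows "rep C \<in> C" "rep C \<in> clifford n" "C = phase_rel n `` {rep C}"
proof -
  from assms obtain U where U: "C = phase_rel n `` {U}" "U \<in> clifford n"
    unfolding clifford_mod_phase_def by (blast elim: quotientE)
  have "U \<in> C" using U equiv_class_self[OF rel_equiv] by simp
  then show r: "rep C \<in> C" unfolding rep_def by (rule someI)
  then have "(U, rep C) \<in> phase_rel n" using U by simp
  then show "rep C \<in> clifford n" using phase_relE by blast
  show "C = phase_rel n `` {rep C}" using U equiv_class_eq[OF rel_equiv \<open>(U, rep C) \<in> phase_rel n\<close>] by simp
qed

lemma class_mem: assumes "C \<in> clifford_mod_phase n" "V \<in> C"
  shows "\<exists>c. cmod c = 1 \<and> V = c \<cdot>\<^sub>m rep C"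
proof -
  have "(rep C, V) \<in> phase_rel n" using assms rep_props(3)[OF assms(1)] by blast
  then show ?thesis using phase_relE by blast
qed

lemma qv_phase: assumes "U \<in> carrier_mat N N" "M \<in> carrier_mat N N" "cmod c = 1" "x < N"
  shows "qv x (c \<cdot>\<^sub>m U) M = qv x U M"
proof -
  have "(c \<cdot>\<^sub>m U) * M * dagger (c \<cdot>\<^sub>m U) = (c * cnj c) \<cdot>\<^sub>m (U * M * dagger U)"
    using assms cdims[OF assms(1)] cdims[OF assms(2)] by (simp add: dagger_smult msimps mult.commute)
  then show ?thesis unfolding qv_def using assms cnj_self[OF assms(3)] by (simp add: mult.commute)
qed

lemma qv_mult: assumes "U \<in> carrier_mat N N" "W \<in> carrier_mat N N" "M \<in> carrier_mat N N"
  shows "qv x (U * W) M = qv x U (W * M * dagger W)"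
proof -
  have "U * W * M * dagger (U * W) = U * (W * M * dagger W) * dagger U"
    using assms cdims[OF assms(1)] cdims[OF assms(2)] cdims[OF assms(3)]
    by (simp add: dagger_mult[OF assms(1) assms(2)] assoc_dims)
  then show ?thesis unfolding qv_def by simp
qed

definition rmul :: "nat \<Rightarrow> complex mat \<Rightarrow> complex mat set \<Rightarrow> complex mat set" where
  "rmul n W C = phase_rel n `` {rep C * W}"

lemma rmul_in: "W \<in> clifford n \<Longrightarrow> C \<in> clifford_mod_phase n \<Longrightarrow> rmul n W C \<in> clifford_mod_phase n"
  unfolding rmul_def clifford_mod_phase_def
  by (rule quotientI, rule cliff_mult[OF rep_props(2)]) (auto simp: clifford_mod_phase_def)

lemma rep_rmul: assumes "W \<in> clifford n" "C \<in> clifford_mod_phase n"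
  shows "\<exists>c. cmod c = 1 \<and> rep (rmul n W C) = c \<cdot>\<^sub>m (rep C * W)"
proof -
  have "rep (rmul n W C) \<in> rmul n W C" using rep_props(1)[OF rmul_in[OF assms]] .
  then have "(rep C * W, rep (rmul n W C)) \<in> phase_rel n" unfolding rmul_def by simp
  then show ?thesis using phase_relE by blast
qed

lemma rmul_inv: assumes W: "W \<in> clifford n" "W * W = 1\<^sub>m (2^n)" and C: "C \<in> clifford_mod_phase n"
  shows "rmul n W (rmul n W C) = C"
proof -
  obtain c where c: "cmod c = 1" "rep (rmul n W C) = c \<cdot>\<^sub>m (rep C * W)" using rep_rmul[OF W(1) C] by blast
  have R: "rep C \<in> clifford n" using rep_props(2)[OF C] .
  note cR = cliffD(1)[OF R] and cW = cliffD(1)[OF W(1)]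
  have "rep (rmul n W C) * W = c \<cdot>\<^sub>m rep C"
    using c(2) W(2) cdims[OF cR] cdims[OF cW] by (simp add: msimps)
  then have "rmul n W (rmul n W C) = phase_rel n `` {c \<cdot>\<^sub>m rep C}" unfolding rmul_def by simp
  also have "\<dots> = phase_rel n `` {rep C}"
    using equiv_class_eq[OF rel_equiv phase_relI[OF R c(1)]] by simp
  also have "\<dots> = C" using rep_props(3)[OF C] by simp
  finally show ?thesis .
qed

lemma sum_shift: assumes W: "W \<in> clifford n" "W * W = 1\<^sub>m (2^n)" and M: "M \<in> carrier_mat (2^n) (2^n)" and x: "x < 2^n"
  shows "(\<Sum>C\<in>clifford_mod_phase n. g (qv x (rep C) M)) = (\<Sum>C\<in>clifford_mod_phase n. g (qv x (rep C * W) M))"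
proof -
  let ?cl = "clifford_mod_phase n"
  have "(\<Sum>C\<in>?cl. g (qv x (rep (rmul n W C)) M)) = (\<Sum>C\<in>?cl. g (qv x (rep C) M))"
    by (rule sum.reindex_bij_witness[where i = "rmul n W" and j = "rmul n W"])
       (auto simp: rmul_inv[OF W] rmul_in[OF W(1)])
  moreover have "qv x (rep (rmul n W C)) M = qv x (rep C * W) M" if C: "C \<in> ?cl" for C
  proof -
    obtain c where c: "cmod c = 1" "rep (rmul n W C) = c \<cdot>\<^sub>m (rep C * W)" using rep_rmul[OF W(1) C] by blast
    have "rep C * W \<in> carrier_mat (2^n) (2^n)" using cliffD(1)[OF cliff_mult[OF rep_props(2)[OF C] W(1)]] .
    then show ?thesis using qv_phase[OF _ M c(1) x] c(2) by simp
  qed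
  ultimately show ?thesis by simp
qed

lemma finite_G4: "finite G4" unfolding G4_def by simp

lemma finite_pg: "finite (pauli_group n)"
proof -
  have "pauli_group n \<subseteq> (\<lambda>(c,ps). c \<cdot>\<^sub>m tensor_list ps) ` (G4 \<times> LL n)"
  proof
    fix P assume "P \<in> pauli_group n"
    then obtain c ps where "c \<in> G4" "ps \<in> LL n" "P = c \<cdot>\<^sub>m tensor_list ps" unfolding pg_iff by blast
    then show "P \<in> (\<lambda>(c,ps). c \<cdot>\<^sub>m tensor_list ps) ` (G4 \<times> LL n)" by force
  qed
  moreover have "finite ((\<lambda>(c,ps). c \<cdot>\<^sub>m tensor_list ps) ` (G4 \<times> LL n))"
    using finite_G4 finite_LL by simp
  ultimately show ?thesis by (rule finite_subset)
qed

lemma twirl_entry: assumes M: "M \<in> carrier_mat (2^n) (2^n)" and ij: "i < 2^n" "j < 2^n"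
  shows "(\<Sum>W\<in>LL n. (tensor_list W * M * tensor_list W) $$ (i,j)) = (if i = j then 2^n * (\<Sum>c<2^n. M $$ (c,c)) else 0)"
proof -
  let ?N = "2^n::nat"
  have "(\<Sum>W\<in>LL n. (tensor_list W * M * tensor_list W) $$ (i,j))
      = (\<Sum>W\<in>LL n. \<Sum>c<?N. \<Sum>d<?N. M $$ (c,d) * (tensor_list W $$ (i,c) * tensor_list W $$ (d,j)))"
    by (intro sum.cong refl) (simp del: assoc_mult_mat add: triple_entry[OF LL_tl_carrier M LL_tl_carrier ij] ac_simps)
  also have "\<dots> = (\<Sum>c<?N. \<Sum>d<?N. \<Sum>W\<in>LL n. M $$ (c,d) * (tensor_list W $$ (i,c) * tensor_list W $$ (d,j)))"
  proof -
    have "(\<Sum>W\<in>LL n. \<Sum>c<?N. \<Sum>d<?N. M $$ (c,d) * (tensor_list W $$ (i,c) * tensor_list W $$ (d,j)))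
        = (\<Sum>c<?N. \<Sum>W\<in>LL n. \<Sum>d<?N. M $$ (c,d) * (tensor_list W $$ (i,c) * tensor_list W $$ (d,j)))"
      by (rule sum.swap)
    also have "\<dots> = (\<Sum>c<?N. \<Sum>d<?N. \<Sum>W\<in>LL n. M $$ (c,d) * (tensor_list W $$ (i,c) * tensor_list W $$ (d,j)))"
      by (rule sum.cong[OF refl], rule sum.swap)
    finally show ?thesis .
  qed
  also have "\<dots> = (\<Sum>c<?N. \<Sum>d<?N. M $$ (c,d) * (if i = j \<and> c = d then 2^n else 0))"
    using ij by (intro sum.cong refl) (simp add: sum_distrib_left[symmetric] compl)
  also have "\<dots> = (\<Sum>c<?N. if i = j then M $$ (c,c) * 2^n else 0)"
  proof (intro sum.cong refl)
    fix c assume "c \<in> {..<?N}"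
    then show "(\<Sum>d<?N. M $$ (c,d) * (if i = j \<and> c = d then 2^n else 0)) = (if i = j then M $$ (c,c) * 2^n else 0)"
      by (cases "i = j") (auto simp: if_distrib cong: if_cong)
  qed
  also have "\<dots> = (if i = j then 2^n * (\<Sum>c<2^n. M $$ (c,c)) else 0)"
    by (simp add: sum_distrib_left ac_simps)
  finally show ?thesis .
qed

lemma cancel_l: "A * B = 1\<^sub>m N \<Longrightarrow> dim_col A = dim_row B \<Longrightarrow> dim_col B = dim_row X \<Longrightarrow> dim_row X = N \<Longrightarrow> A * (B * X) = (X :: complex mat)"
  using assoc_dims[of A B X] by simp

lemma scalar_lemma: assumes U: "U \<in> clifford n" and V: "V \<in> clifford n"
  and h: "\<And>ws. ws \<in> LL n \<Longrightarrow> U * tensor_list ws * dagger U = V * tensor_list ws * dagger V"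
  shows "\<exists>c. cmod c = 1 \<and> V = c \<cdot>\<^sub>m U"
proof -
  let ?N = "2^n::nat"
  note Uc = cliffD[OF U] and Vc = cliffD[OF V]
  note dU = cdims[OF Uc(1)] and dV = cdims[OF Vc(1)]
  define M where "M = dagger V * U"
  have cM: "M \<in> carrier_mat ?N ?N" unfolding M_def by (rule mult_carrier_mat[OF dagger_carrier[OF Vc(1)] Uc(1)])
  note dM = cdims[OF cM]
  have comm: "M * tensor_list W = tensor_list W * M" if W: "W \<in> LL n" for W
  proof -
    let ?T = "tensor_list W"
    have dT: "dim_row ?T = ?N" "dim_col ?T = ?N" using W LL_len by auto
    have "dagger V * (U * ?T * dagger U) * U = dagger V * (V * ?T * dagger V) * U"
      using h[OF W] by simp
    then have "dagger V * (U * (?T * (dagger U * U))) = dagger V * (V * (?T * (dagger V * U)))"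
      using dU dV dT by (simp add: assoc_dims)
    then have "dagger V * (U * ?T) = ?T * (dagger V * U)"
      using dU dV dT Uc(2) Vc(2) cancel_l[OF Vc(2)] by simp
    then show ?thesis unfolding M_def using dU dV dT by (simp add: assoc_dims)
  qed
  have TMT: "tensor_list W * M * tensor_list W = M" if W: "W \<in> LL n" for W
  proof -
    have dT: "dim_row (tensor_list W) = ?N" "dim_col (tensor_list W) = ?N" using W LL_len by auto
    have "tensor_list W * M * tensor_list W = tensor_list W * (tensor_list W * M)"
      using comm[OF W] dM dT by (simp add: assoc_dims)
    also have "\<dots> = (tensor_list W * tensor_list W) * M"
      using dM dT by (simp only: assoc_dims)
    finally show ?thesis using tl_sq[OF W] cM by simp
  qed
  define d where "d = (\<Sum>c<?N. M $$ (c,c)) / 2^n"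
  have Md: "M = d \<cdot>\<^sub>m 1\<^sub>m ?N"
  proof (rule eq_matI)
    fix i j assume "i < dim_row (d \<cdot>\<^sub>m 1\<^sub>m ?N)" "j < dim_col (d \<cdot>\<^sub>m (1\<^sub>m ?N :: complex mat))"
    then have ij: "i < ?N" "j < ?N" by auto
    have "(\<Sum>W\<in>LL n. (tensor_list W * M * tensor_list W) $$ (i,j)) = (\<Sum>W\<in>LL n. M $$ (i,j))"
      by (intro sum.cong refl) (simp add: TMT)
    also have "\<dots> = 4^n * M $$ (i,j)" by (simp add: card_LL)
    finally have "4^n * M $$ (i,j) = (if i = j then 2^n * (\<Sum>c<2^n. M $$ (c,c)) else 0)"
      using twirl_entry[OF cM ij] by simp
    moreover have "(4::complex)^n = 2^n * 2^n" by (simp add: power_mult_distrib[symmetric])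
    ultimately show "M $$ (i,j) = (d \<cdot>\<^sub>m 1\<^sub>m ?N) $$ (i,j)"
      using ij by (auto simp: d_def field_simps split: if_splits)
  qed (use cM in auto)
  have "V * M = U"
    unfolding M_def using dU dV Vc(3) by (simp add: assoc_dims[symmetric])
  then have Ud: "U = d \<cdot>\<^sub>m V" unfolding Md using dV by (simp add: smult_mult_r)
  have "dagger U * U = (cnj d * d) \<cdot>\<^sub>m (dagger V * V)"
    unfolding Ud using dV by (simp add: dagger_smult msimps mult.commute)
  then have "1\<^sub>m ?N = (cnj d * d) \<cdot>\<^sub>m 1\<^sub>m ?N" using Uc(2) Vc(2) by simp
  then have "(1\<^sub>m ?N :: complex mat) $$ (0,0) = ((cnj d * d) \<cdot>\<^sub>m 1\<^sub>m ?N) $$ (0,0)" by simp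
  then have dd: "cnj d * d = 1" by simp
  have "cmod d = 1"
  proof -
    have "complex_of_real ((cmod d)^2) = 1" using complex_norm_square[of d] dd by (simp add: mult.commute)
    then have "(cmod d)^2 = 1" by (metis of_real_eq_1_iff)
    then show ?thesis using norm_ge_zero[of d] by (auto simp: power2_eq_1_iff)
  qed
  moreover have "V = cnj d \<cdot>\<^sub>m U" unfolding Ud using dd by (simp add: smult_smult_mat one_smult_mat)
  ultimately show ?thesis by (intro exI[of _ "cnj d"]) simp
qed

lemma finite_cl: "finite (clifford_mod_phase n)"
proof -
  let ?cl = "clifford_mod_phase n" and ?pg = "pauli_group n"
  let ?f = "\<lambda>C. (\<lambda>P. (P, rep C * P * dagger (rep C))) ` ?pg"
  have "inj_on ?f ?cl"
  proof (rule inj_onI)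
    fix C D assume C: "C \<in> ?cl" and D: "D \<in> ?cl" and e: "?f C = ?f D"
    have "rep C * tensor_list ws * dagger (rep C) = rep D * tensor_list ws * dagger (rep D)" if "ws \<in> LL n" for ws
    proof -
      have "(tensor_list ws, rep C * tensor_list ws * dagger (rep C)) \<in> ?f D"
        using e T_pg[OF that] by blast
      then show ?thesis by auto
    qed
    then obtain c where "cmod c = 1" "rep D = c \<cdot>\<^sub>m rep C"
      using scalar_lemma[OF rep_props(2)[OF C] rep_props(2)[OF D]] by blast
    then have "(rep C, rep D) \<in> phase_rel n" using phase_relI[OF rep_props(2)[OF C]] by simp
    then show "C = D" using rep_props(3)[OF C] rep_props(3)[OF D] equiv_class_eq[OF rel_equiv] by metis
  qed
  moreover have "?f ` ?cl \<subseteq> Pow (?pg \<times> ?pg)"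
    using cliffD(4)[OF rep_props(2)] by auto
  moreover have "finite (Pow (?pg \<times> ?pg))" using finite_pg by simp
  ultimately show ?thesis by (rule inj_on_finite)
qed

lemma cl_nonempty: "clifford_mod_phase n \<noteq> {}"
proof -
  have "1\<^sub>m (2^n) \<in> clifford n"
    using T_cliff[OF I_LL[of n]] by (simp add: tl_one)
  then show ?thesis unfolding clifford_mod_phase_def by (auto dest: quotientI)
qed

lemma LL_neq_I: assumes "a \<in> LL n" "a \<noteq> replicate n pauliI" shows "\<exists>k<n. a!k \<noteq> pauliI"
proof (rule ccontr)
  assume "\<not> (\<exists>k<n. a!k \<noteq> pauliI)"
  then have "a = replicate n pauliI" using assms(1) by (intro nth_equalityI) (auto simp: LL_len)
  then show False using assms(2) by simp
qed

lemma prod_delta1: assumes "k < (n::nat)" shows "(\<Prod>j<n. if j = k then c else 1) = (c::complex)"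
proof -
  have "(\<Prod>j<n. if j = k then c else 1) = (if k = k then c else 1) * (\<Prod>j\<in>{..<n}-{k}. if j = k then c else 1)"
    by (rule prod.remove) (use assms in auto)
  also have "(\<Prod>j\<in>{..<n}-{k}. if j = k then c else 1) = 1" by (intro prod.neutral) auto
  finally show ?thesis by simp
qed

lemma prod_delta2: assumes "k < (n::nat)" "l < n" "k \<noteq> l"
  shows "(\<Prod>j<n. (if j = k then c1 else 1) * (if j = l then c2 else 1)) = (c1 * c2 :: complex)"
  by (simp only: prod.distrib prod_delta1[OF assms(1)] prod_delta1[OF assms(2)])

lemma upd_LL: "r \<in> LL n \<Longrightarrow> s \<in> S4 \<Longrightarrow> r[k := s] \<in> LL n"
  by (auto simp: PL_def dest: subsetD[OF set_update_subset_insert])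

lemma anti2: assumes a: "a \<in> LL n" "a \<noteq> replicate n pauliI" and b: "b \<in> LL n" "b \<noteq> replicate n pauliI"
  shows "\<exists>r\<in>LL n. chi r a = -1 \<and> chi r b = -1"
proof (cases "\<exists>k<n. a!k \<noteq> pauliI \<and> b!k \<noteq> pauliI")
  case True
  then obtain k where k: "k < n" "a!k \<noteq> pauliI" "b!k \<noteq> pauliI" by blast
  obtain s where s: "s \<in> S4" "chi1 s (a!k) = -1" "chi1 s (b!k) = -1"
    using anti1[OF LL_nth[OF a(1) k(1)] LL_nth[OF b(1) k(1)] k(2,3)] by blast
  let ?r = "(replicate n pauliI)[k := s]"
  have r: "?r \<in> LL n" using upd_LL[OF I_LL s(1)] .
  have e: "chi ?r c = chi1 s (c!k)" if "c \<in> LL n" for c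
  proof -
    have "chi ?r c = (\<Prod>j<n. if j = k then chi1 s (c!k) else 1)"
      unfolding chi_def using that k by (intro prod.cong) (auto simp: LL_len chi1_I)
    then show ?thesis using prod_delta1[OF k(1)] by simp
  qed
  show ?thesis by (intro bexI[OF _ r]) (simp add: e[OF a(1)] e[OF b(1)] s)
next
  case False
  obtain k where k: "k < n" "a!k \<noteq> pauliI" using LL_neq_I[OF a] by blast
  obtain l where l: "l < n" "b!l \<noteq> pauliI" using LL_neq_I[OF b] by blast
  have bk: "b!k = pauliI" using False k by blast
  have al: "a!l = pauliI" using False l by blast
  have kl: "k \<noteq> l" using k l al by auto
  obtain s where s: "s \<in> S4" "chi1 s (a!k) = -1"
    using anti1[OF LL_nth[OF a(1) k(1)] LL_nth[OF a(1) k(1)] k(2) k(2)] by blast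
  obtain t where t: "t \<in> S4" "chi1 t (b!l) = -1"
    using anti1[OF LL_nth[OF b(1) l(1)] LL_nth[OF b(1) l(1)] l(2) l(2)] by blast
  let ?r = "(replicate n pauliI)[k := s, l := t]"
  have r: "?r \<in> LL n" using upd_LL[OF upd_LL[OF I_LL s(1)] t(1)] .
  have e: "chi ?r c = chi1 s (c!k) * chi1 t (c!l)" if "c \<in> LL n" for c
  proof -
    have "chi ?r c = (\<Prod>j<n. (if j = k then chi1 s (c!k) else 1) * (if j = l then chi1 t (c!l) else 1))"
      unfolding chi_def using that k l kl by (intro prod.cong) (auto simp: LL_len chi1_I)
    then show ?thesis using prod_delta2[OF k(1) l(1) kl] by simp
  qed
  show ?thesis by (intro bexI[OF _ r]) (simp add: e[OF a(1)] e[OF b(1)] s t bk al chi1_I)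
qed

context
  fixes n x :: nat and \<rho> :: "complex mat"
  assumes x: "x < 2^n" and R: "\<rho> \<in> carrier_mat (2^n) (2^n)"
begin

abbreviation "cl \<equiv> clifford_mod_phase n"
abbreviation "II \<equiv> replicate n pauliI"

definition kk :: "complex mat list \<Rightarrow> complex" where
  "kk P = (\<Sum>C\<in>cl. (qv x (rep C) (tensor_list P))^2)"

lemma repU: "C \<in> cl \<Longrightarrow> rep C \<in> carrier_mat (2^n) (2^n) \<and> rep C * dagger (rep C) = 1\<^sub>m (2^n)"
  using cliffD(1,3)[OF rep_props(2)] by blast

lemma shiftT: assumes W: "W \<in> LL n" and M: "M \<in> carrier_mat (2^n) (2^n)"
  shows "(\<Sum>C\<in>cl. g (qv x (rep C) M)) = (\<Sum>C\<in>cl. g (qv x (rep C) (tensor_list W * M * tensor_list W)))"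
proof -
  have "(\<Sum>C\<in>cl. g (qv x (rep C) M)) = (\<Sum>C\<in>cl. g (qv x (rep C * tensor_list W) M))"
    by (rule sum_shift[OF T_cliff[OF W] tl_sq[OF W] M x])
  also have "\<dots> = (\<Sum>C\<in>cl. g (qv x (rep C) (tensor_list W * M * tensor_list W)))"
    by (intro sum.cong refl) (simp add: qv_mult[OF repU[THEN conjunct1] LL_tl_carrier[OF W] M] tl_herm[OF W])
  finally show ?thesis .
qed

lemma S1: "(\<Sum>C\<in>cl. qv x (rep C) \<rho>) = of_nat (card cl) * rr n \<rho> II / 2^n"
proof -
  let ?S = "\<Sum>C\<in>cl. qv x (rep C) \<rho>"
  have "(4::complex)^n * ?S = (\<Sum>W\<in>LL n. ?S)" by (simp add: card_LL)
  also have "\<dots> = (\<Sum>W\<in>LL n. \<Sum>C\<in>cl. qv x (rep C) (tensor_list W * \<rho> * tensor_list W))"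
    by (rule sum.cong[OF refl], rule shiftT[OF _ R])
  also have "\<dots> = (\<Sum>C\<in>cl. \<Sum>W\<in>LL n. qv x (rep C) (tensor_list W * \<rho> * tensor_list W))"
    by (rule sum.swap)
  also have "\<dots> = (\<Sum>C\<in>cl. 2^n * rr n \<rho> II)"
    by (intro sum.cong refl) (simp add: twirl1[OF repU[THEN conjunct1] R x] qv_I[OF _ _ x] repU)
  also have "\<dots> = of_nat (card cl) * 2^n * rr n \<rho> II" by simp
  finally have "(4::complex)^n * ?S = of_nat (card cl) * 2^n * rr n \<rho> II" .
  moreover have "(4::complex)^n = 2^n * 2^n" by (simp add: power_mult_distrib[symmetric])
  ultimately show ?thesis by (simp add: field_simps)
qed

lemma S2a: "4^n * (\<Sum>C\<in>cl. (qv x (rep C) \<rho>)^2) = (\<Sum>P\<in>LL n. (rr n \<rho> P)^2 * kk P)"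
proof -
  let ?S = "\<Sum>C\<in>cl. (qv x (rep C) \<rho>)^2"
  have "(4::complex)^n * ?S = (\<Sum>W\<in>LL n. ?S)" by (simp add: card_LL)
  also have "\<dots> = (\<Sum>W\<in>LL n. \<Sum>C\<in>cl. (qv x (rep C) (tensor_list W * \<rho> * tensor_list W))^2)"
    by (rule sum.cong[OF refl], rule shiftT[OF _ R])
  also have "\<dots> = (\<Sum>C\<in>cl. \<Sum>W\<in>LL n. (qv x (rep C) (tensor_list W * \<rho> * tensor_list W))^2)"
    by (rule sum.swap)
  also have "\<dots> = (\<Sum>C\<in>cl. \<Sum>P\<in>LL n. (rr n \<rho> P)^2 * (qv x (rep C) (tensor_list P))^2)"
    by (rule sum.cong[OF refl], rule twirl2[OF repU[THEN conjunct1] R x])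
  also have "\<dots> = (\<Sum>P\<in>LL n. (rr n \<rho> P)^2 * kk P)"
    unfolding kk_def by (subst sum.swap) (simp add: sum_distrib_left)
  finally show ?thesis .
qed

lemma kk_I: "kk II = of_nat (card cl)"
  unfolding kk_def by (simp add: qv_I[OF _ _ x] repU)

lemma kk_sum: "(\<Sum>P\<in>LL n. kk P) = of_nat (card cl) * 2^n"
proof -
  have "(\<Sum>P\<in>LL n. kk P) = (\<Sum>C\<in>cl. \<Sum>P\<in>LL n. (qv x (rep C) (tensor_list P))^2)"
    unfolding kk_def by (rule sum.swap)
  also have "\<dots> = (\<Sum>C\<in>cl. 2^n)"
    by (intro sum.cong refl) (simp add: sumq[OF _ x] repU x)
  finally show ?thesis by simp
qed

lemma kk_anti: assumes a: "a \<in> LL n" and b: "b \<in> LL n" and ab: "chi a b = -1"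
  shows "kk a = kk b"
proof -
  let ?V = "gate a b"
  have "kk a = (\<Sum>C\<in>cl. (qv x (rep C * ?V) (tensor_list a))^2)"
    unfolding kk_def by (rule sum_shift[OF gate_cliff[OF a b ab] gate_sq[OF a b ab] LL_tl_carrier[OF a] x])
  also have "\<dots> = kk b"
    unfolding kk_def
    by (intro sum.cong refl)
       (simp add: qv_mult[OF repU[THEN conjunct1] gate_carrier[OF a b ab] LL_tl_carrier[OF a]] gate_herm[OF a b ab] gate_conj[OF a b ab])
  finally show ?thesis .
qed

lemma kk_const: assumes "a \<in> LL n" "a \<noteq> II" "b \<in> LL n" "b \<noteq> II" shows "kk a = kk b"
proof -
  obtain r where r: "r \<in> LL n" "chi r a = -1" "chi r b = -1" using anti2[OF assms] by blast
  show ?thesis using kk_anti[OF r(1) assms(1) r(2)] kk_anti[OF r(1) assms(3) r(3)] by simp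
qed

lemma S2: "4^n * (\<Sum>C\<in>cl. (qv x (rep C) \<rho>)^2)
   = of_nat (card cl) * (rr n \<rho> II)^2 + of_nat (card cl) / (2^n + 1) * ((\<Sum>P\<in>LL n. (rr n \<rho> P)^2) - (rr n \<rho> II)^2)"
proof -
  let ?m = "of_nat (card cl) :: complex"
  let ?R = "LL n - {II}"
  have fin: "finite (LL n)" by (rule finite_LL)
  have I: "II \<in> LL n" by (rule I_LL)
  have split1: "(\<Sum>P\<in>LL n. f P) = f II + (\<Sum>P\<in>?R. f P)" for f :: "complex mat list \<Rightarrow> complex"
    using sum.remove[OF fin I] by simp
  have main: "(\<Sum>P\<in>?R. (rr n \<rho> P)^2 * kk P) = ?m / (2^n + 1) * (\<Sum>P\<in>?R. (rr n \<rho> P)^2)"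
  proof (cases "?R = {}")
    case True then show ?thesis unfolding True by simp
  next
    case False
    then obtain P0 where P0: "P0 \<in> ?R" by blast
    have K: "kk P = kk P0" if "P \<in> ?R" for P using kk_const[of P P0] that P0 by blast
    have cardR: "card ?R = 4^n - 1" using card_LL[of n] I fin by (simp add: card_Diff_singleton)
    have pos: "card ?R > 0" using False fin by (simp add: card_gt_0_iff)
    have "(\<Sum>P\<in>?R. kk P) = of_nat (card ?R) * kk P0" using K by simp
    moreover have "(\<Sum>P\<in>?R. kk P) = ?m * 2^n - ?m"
    proof -
      have "?m + (\<Sum>P\<in>?R. kk P) = ?m * 2^n" using kk_sum split1[of kk] kk_I by simp
      then show ?thesis by (metis add_diff_cancel_left')
    qed
    ultimately have eq: "of_nat (card ?R) * kk P0 = ?m * (2^n - 1)" by (simp add: algebra_simps)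
    have c: "(of_nat (card ?R) :: complex) = (2^n - 1) * (2^n + 1)"
    proof -
      have "(4::nat)^n \<ge> 1" by simp
      then have "(of_nat (4^n - 1) :: complex) = 4^n - 1" by (simp add: of_nat_diff)
      also have "(4::complex)^n = 2^n * 2^n" by (simp add: power_mult_distrib[symmetric])
      finally show ?thesis using cardR by (simp add: algebra_simps)
    qed
    have nz: "(2::complex)^n - 1 \<noteq> 0"
    proof
      assume "(2::complex)^n - 1 = 0"
      then have "(of_nat (card ?R) :: complex) = 0" using c by simp
      then show False using pos by simp
    qed
    have nz2: "(2::complex)^n + 1 \<noteq> 0"
    proof -
      have "(2::complex)^n + 1 = of_nat (2^n + 1)" by simp
      also have "\<dots> \<noteq> 0" by (simp only: of_nat_eq_0_iff)
      finally show ?thesis .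
    qed
    have "((2::complex)^n - 1) * (kk P0 * (2^n+1) - ?m) = 0"
      using eq unfolding c by (simp add: algebra_simps)
    then have "kk P0 * (2^n+1) = ?m" using nz by simp
    then have "kk P0 = ?m / (2^n + 1)"
      using nz2 by (simp add: field_simps)
    then show ?thesis using K by (simp add: sum_distrib_left ac_simps)
  qed
  have "4^n * (\<Sum>C\<in>cl. (qv x (rep C) \<rho>)^2) = (rr n \<rho> II)^2 * kk II + (\<Sum>P\<in>?R. (rr n \<rho> P)^2 * kk P)"
    using S2a split1 by simp
  also have "\<dots> = ?m * (rr n \<rho> II)^2 + ?m / (2^n + 1) * ((\<Sum>P\<in>LL n. (rr n \<rho> P)^2) - (rr n \<rho> II)^2)"
    using main split1[of "\<lambda>P. (rr n \<rho> P)^2"] kk_I by (simp add: ac_simps)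
  finally show ?thesis .
qed

end

context
  fixes N :: nat and \<rho> :: "complex mat"
  assumes D: "density_mat N \<rho>"
begin

lemma Dc: "\<rho> \<in> carrier_mat N N" using D by (simp add: density_mat_def)

lemma Dherm: "a < N \<Longrightarrow> b < N \<Longrightarrow> \<rho> $$ (b,a) = cnj (\<rho> $$ (a,b))"
proof -
  assume ab: "a < N" "b < N"
  have h: "dagger \<rho> = \<rho>" using D by (simp add: density_mat_def)
  have "dagger \<rho> $$ (b,a) = cnj (\<rho> $$ (a,b))" using ab Dc by (intro index_dagger) auto
  then show ?thesis unfolding h .
qed

lemma Dtr: "(\<Sum>c<N. \<rho> $$ (c,c)) = 1"
  using D Dc by (simp add: density_mat_def mtrace_def)

lemma Dpsd: "v \<in> carrier_vec N \<Longrightarrow> Im (\<Sum>i<N. cnj (v $ i) * (\<rho> *\<^sub>v v) $ i) = 0 \<and> Re (\<Sum>i<N. cnj (v $ i) * (\<rho> *\<^sub>v v) $ i) \<ge> 0"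
  using D unfolding density_mat_def Let_def by blast

lemma quad2: fixes \<alpha> \<beta> :: complex assumes ab: "a < N" "b < N" "a \<noteq> b"
  defines "v \<equiv> vec N (\<lambda>k. if k = a then \<alpha> else if k = b then \<beta> else 0)"
  shows "(\<Sum>i<N. cnj (v $ i) * (\<rho> *\<^sub>v v) $ i)
       = cnj \<alpha> * (\<rho> $$ (a,a) * \<alpha> + \<rho> $$ (a,b) * \<beta>) + cnj \<beta> * (\<rho> $$ (b,a) * \<alpha> + \<rho> $$ (b,b) * \<beta>)"
proof -
  have mv: "(\<rho> *\<^sub>v v) $ i = \<rho> $$ (i,a) * \<alpha> + \<rho> $$ (i,b) * \<beta>" if i: "i < N" for i
  proof -
    have "(\<rho> *\<^sub>v v) $ i = (\<Sum>k<N. \<rho> $$ (i,k) * v $ k)"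
      using i Dc by (simp add: scalar_prod_def v_def atLeast0LessThan)
    also have "\<dots> = (\<Sum>k<N. (if k = a then \<rho> $$ (i,k) * \<alpha> else 0) + (if k = b then \<rho> $$ (i,k) * \<beta> else 0))"
      using ab by (intro sum.cong refl) (auto simp: v_def)
    also have "\<dots> = \<rho> $$ (i,a) * \<alpha> + \<rho> $$ (i,b) * \<beta>"
      using ab by (simp add: sum.distrib)
    finally show ?thesis .
  qed
  have "(\<Sum>i<N. cnj (v $ i) * (\<rho> *\<^sub>v v) $ i)
      = (\<Sum>i<N. (if i = a then cnj \<alpha> * (\<rho> *\<^sub>v v) $ i else 0) + (if i = b then cnj \<beta> * (\<rho> *\<^sub>v v) $ i else 0))"
    using ab by (intro sum.cong refl) (auto simp: v_def)
  also have "\<dots> = cnj \<alpha> * (\<rho> *\<^sub>v v) $ a + cnj \<beta> * (\<rho> *\<^sub>v v) $ b"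
    using ab by (simp add: sum.distrib)
  finally show ?thesis using mv ab by simp
qed

lemma vcarr: "vec N f \<in> carrier_vec N" by simp

lemma diag_real: "a < N \<Longrightarrow> \<rho> $$ (a,a) = complex_of_real (Re (\<rho> $$ (a,a)))"
proof -
  assume a: "a < N"
  have "Im (\<rho> $$ (a,a)) = Im (cnj (\<rho> $$ (a,a)))" using arg_cong[where f=Im, OF Dherm[OF a a]] .
  then have "Im (\<rho> $$ (a,a)) = 0" by simp
  then show ?thesis by (simp add: complex_eq_iff)
qed

lemma diag_nonneg: assumes "a < N" shows "Re (\<rho> $$ (a,a)) \<ge> 0"
proof -
  let ?v = "vec N (\<lambda>k. if k = a then (1::complex) else 0)"
  have mv: "(\<rho> *\<^sub>v ?v) $ i = \<rho> $$ (i,a)" if i: "i < N" for i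
  proof -
    have "(\<rho> *\<^sub>v ?v) $ i = (\<Sum>k<N. \<rho> $$ (i,k) * ?v $ k)"
      using i Dc by (simp add: scalar_prod_def atLeast0LessThan)
    also have "\<dots> = (\<Sum>k<N. if k = a then \<rho> $$ (i,k) else 0)"
      by (intro sum.cong refl) simp
    also have "\<dots> = \<rho> $$ (i,a)" using assms by simp
    finally show ?thesis .
  qed
  have "(\<Sum>i<N. cnj (?v $ i) * (\<rho> *\<^sub>v ?v) $ i) = (\<Sum>i<N. if i = a then \<rho> $$ (a,a) else 0)"
    by (intro sum.cong refl) (simp add: mv)
  also have "\<dots> = \<rho> $$ (a,a)" using assms by simp
  finally show ?thesis using Dpsd[OF vcarr, of "\<lambda>k. if k = a then (1::complex) else 0"] by simp
qed

lemma expand_q: "cnj 1 * (A' * 1 + r * (- complex_of_real t * cnj r)) + cnj (- complex_of_real t * cnj r) * (cnj r * 1 + B' * (- complex_of_real t * cnj r))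
   = A' - 2 * complex_of_real t * (r * cnj r) + (complex_of_real t)^2 * B' * (r * cnj r)"
  by (simp add: algebra_simps power2_eq_square)

lemma offdiag: assumes ab: "a < N" "b < N" "a \<noteq> b"
  shows "(cmod (\<rho> $$ (a,b)))^2 \<le> Re (\<rho> $$ (a,a)) * Re (\<rho> $$ (b,b))"
proof -
  let ?A = "Re (\<rho> $$ (a,a))" and ?B = "Re (\<rho> $$ (b,b))" and ?r = "\<rho> $$ (a,b)"
  let ?s = "(cmod ?r)^2"
  have rr: "?r * cnj ?r = complex_of_real ?s" by (rule complex_norm_square[symmetric])
  have B0: "?B \<ge> 0" using diag_nonneg[OF ab(2)] .
  have q: "Re (complex_of_real (?A - 2 * t * ?s + t^2 * ?B * ?s)) \<ge> 0" for t :: real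
  proof -
    let ?f = "\<lambda>k. if k = a then (1::complex) else if k = b then - complex_of_real t * cnj ?r else 0"
    have ge: "Re (\<Sum>i<N. cnj (vec N ?f $ i) * (\<rho> *\<^sub>v vec N ?f) $ i) \<ge> 0"
      by (rule Dpsd[OF vcarr, THEN conjunct2])
    let ?\<alpha> = "1::complex" and ?\<beta> = "- complex_of_real t * cnj ?r"
    have "(\<Sum>i<N. cnj (vec N (\<lambda>k. if k = a then ?\<alpha> else if k = b then ?\<beta> else 0) $ i) *
            (\<rho> *\<^sub>v vec N (\<lambda>k. if k = a then ?\<alpha> else if k = b then ?\<beta> else 0)) $ i)
        = cnj ?\<alpha> * (\<rho> $$ (a,a) * ?\<alpha> + ?r * ?\<beta>) + cnj ?\<beta> * (\<rho> $$ (b,a) * ?\<alpha> + \<rho> $$ (b,b) * ?\<beta>)"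
      by (rule quad2[OF ab])
    also have "\<dots> = complex_of_real (?A - 2 * t * ?s + t^2 * ?B * ?s)"
    proof -
      have "cnj ?\<alpha> * (\<rho> $$ (a,a) * ?\<alpha> + ?r * ?\<beta>) + cnj ?\<beta> * (\<rho> $$ (b,a) * ?\<alpha> + \<rho> $$ (b,b) * ?\<beta>)
          = \<rho> $$ (a,a) - 2 * complex_of_real t * (?r * cnj ?r) + (complex_of_real t)^2 * \<rho> $$ (b,b) * (?r * cnj ?r)"
        unfolding Dherm[OF ab(1) ab(2)] by (rule expand_q)
      also have "\<dots> = complex_of_real (?A - 2 * t * ?s + t^2 * ?B * ?s)"
        unfolding rr by (subst diag_real[OF ab(1)], subst diag_real[OF ab(2)], simp)
      finally show ?thesis .
    qed
    finally have e: "(\<Sum>i<N. cnj (vec N ?f $ i) * (\<rho> *\<^sub>v vec N ?f) $ i) = complex_of_real (?A - 2 * t * ?s + t^2 * ?B * ?s)" .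
    show ?thesis using ge unfolding e .
  qed
  then have q': "?A - 2 * t * ?s + t^2 * ?B * ?s \<ge> 0" for t by simp
  show ?thesis
  proof (cases "?s = 0")
    case True then show ?thesis using B0 diag_nonneg[OF ab(1)] by simp
  next
    case False
    then have s0: "?s > 0" by simp
    show ?thesis
    proof (cases "?B = 0")
      case True
      have "?A - 2 * ((?A + 1) / (2 * ?s)) * ?s + ((?A + 1) / (2 * ?s))^2 * ?B * ?s \<ge> 0" by (rule q')
      then have "?A - (?A + 1) \<ge> 0" using True s0 by (simp add: field_simps)
      then show ?thesis by simp
    next
      case False
      then have Bp: "?B > 0" using B0 by simp
      have "?A - 2 * (1 / ?B) * ?s + (1 / ?B)^2 * ?B * ?s \<ge> 0" by (rule q')
      then have "?A - ?s / ?B \<ge> 0" using Bp by (simp add: field_simps power2_eq_square)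
      then show ?thesis using Bp by (simp add: field_simps)
    qed
  qed
qed

lemma entry_sq_le: assumes "a < N" "b < N"
  shows "(cmod (\<rho> $$ (a,b)))^2 \<le> Re (\<rho> $$ (a,a)) * Re (\<rho> $$ (b,b))"
proof (cases "a = b")
  case True
  have "cmod (\<rho> $$ (a,a)) = \<bar>Re (\<rho> $$ (a,a))\<bar>" using diag_real[OF assms(1)] by (metis norm_of_real)
  then show ?thesis using True by (simp add: power2_eq_square)
next
  case False then show ?thesis using offdiag assms by blast
qed

lemma purity: "Re (\<Sum>c<N. \<Sum>d<N. \<rho> $$ (d,c) * \<rho> $$ (c,d)) \<le> 1"
proof -
  have "Re (\<Sum>c<N. \<Sum>d<N. \<rho> $$ (d,c) * \<rho> $$ (c,d)) = (\<Sum>c<N. \<Sum>d<N. (cmod (\<rho> $$ (c,d)))^2)"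
  proof -
    have "\<rho> $$ (d,c) * \<rho> $$ (c,d) = complex_of_real ((cmod (\<rho> $$ (c,d)))^2)" if "c < N" "d < N" for c d
    proof -
      have "\<rho> $$ (d,c) * \<rho> $$ (c,d) = \<rho> $$ (c,d) * cnj (\<rho> $$ (c,d))"
        by (subst Dherm[OF that]) (rule mult.commute)
      then show ?thesis by (simp only: complex_norm_square)
    qed
    then have "(\<Sum>c<N. \<Sum>d<N. \<rho> $$ (d,c) * \<rho> $$ (c,d)) = (\<Sum>c<N. \<Sum>d<N. complex_of_real ((cmod (\<rho> $$ (c,d)))^2))"
      by (intro sum.cong refl) auto
    then show ?thesis by simp
  qed
  also have "\<dots> \<le> (\<Sum>c<N. \<Sum>d<N. Re (\<rho> $$ (c,c)) * Re (\<rho> $$ (d,d)))"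
    by (intro sum_mono) (simp add: entry_sq_le)
  also have "\<dots> = (\<Sum>c<N. Re (\<rho> $$ (c,c))) * (\<Sum>d<N. Re (\<rho> $$ (d,d)))"
    by (simp add: sum_product)
  also have "(\<Sum>c<N. Re (\<rho> $$ (c,c))) = 1"
    using Dtr by (metis Re_sum one_complex.simps(1))
  finally show ?thesis by simp
qed

lemma qv_real: assumes "U \<in> carrier_mat N N" "x < N" shows "Im (qv x U \<rho>) = 0"
proof -
  have "cnj (qv x U \<rho>) = qv x U \<rho>"
  proof -
    have "cnj (qv x U \<rho>) = (\<Sum>i<N. \<Sum>j<N. cnj (U $$ (x,i)) * cnj (\<rho> $$ (i,j)) * U $$ (x,j))"
      by (simp add: qv_entry[OF assms(1) Dc assms(2)])
    also have "\<dots> = (\<Sum>i<N. \<Sum>j<N. cnj (U $$ (x,i)) * \<rho> $$ (j,i) * U $$ (x,j))"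
    proof (intro sum.cong refl)
      fix i j assume "i \<in> {..<N}" "j \<in> {..<N}"
      then have "\<rho> $$ (j,i) = cnj (\<rho> $$ (i,j))" by (intro Dherm) auto
      then show "cnj (U $$ (x,i)) * cnj (\<rho> $$ (i,j)) * U $$ (x,j) = cnj (U $$ (x,i)) * \<rho> $$ (j,i) * U $$ (x,j)"
        by simp
    qed
    also have "\<dots> = (\<Sum>j<N. \<Sum>i<N. U $$ (x,j) * \<rho> $$ (j,i) * cnj (U $$ (x,i)))"
      by (subst sum.swap) (simp add: ac_simps)
    also have "\<dots> = qv x U \<rho>" by (simp add: qv_entry[OF assms(1) Dc assms(2)])
    finally show ?thesis .
  qed
  then have "Im (cnj (qv x U \<rho>)) = Im (qv x U \<rho>)" by (rule arg_cong)
  then show ?thesis by simp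
qed

end

lemma trace_proj: assumes "A \<in> carrier_mat N N" "x < N"
  shows "mtrace (A * basis_proj N x) = A $$ (x,x)"
proof -
  have "mtrace (A * basis_proj N x) = (\<Sum>i<N. (A * basis_proj N x) $$ (i,i))"
    using assms by (simp add: mtrace_def basis_proj_def)
  also have "\<dots> = (\<Sum>i<N. if i = x then A $$ (x,x) else 0)"
  proof (intro sum.cong refl)
    fix i assume i: "i \<in> {..<N}"
    have "(A * basis_proj N x) $$ (i,i) = (\<Sum>k<N. A $$ (i,k) * basis_proj N x $$ (k,i))"
      using assms i by (simp add: scalar_prod_def basis_proj_def atLeast0LessThan)
    also have "\<dots> = (\<Sum>k<N. if k = x then (if i = x then A $$ (x,x) else 0) else 0)"
      using assms i by (intro sum.cong refl) (auto simp: basis_proj_def)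
    also have "\<dots> = (if i = x then A $$ (x,x) else 0)" using assms by simp
    finally show "(A * basis_proj N x) $$ (i,i) = (if i = x then A $$ (x,x) else 0)" .
  qed
  also have "\<dots> = A $$ (x,x)" using assms by simp
  finally show ?thesis .
qed

lemma outcome_qv: assumes "U \<in> carrier_mat (2^n) (2^n)" "\<rho> \<in> carrier_mat (2^n) (2^n)" "x < 2^n"
  shows "outcome_prob n U \<rho> x = Re (qv x U \<rho>)"
  unfolding outcome_prob_def qv_def using assms
  by (subst trace_proj[of _ "2^n"]) (auto intro: dagger_carrier)

lemma cs_ineq:
  fixes f :: "'a \<Rightarrow> real"
  assumes "finite B"
  shows "(\<Sum>a\<in>B. f a)^2 \<le> real (card B) * (\<Sum>a\<in>B. (f a)^2)"
proof -
  let ?k = "real (card B)" and ?S = "\<Sum>a\<in>B. f a"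
  have "0 \<le> (\<Sum>a\<in>B. (f a * ?k - ?S)^2)" by (intro sum_nonneg) auto
  also have "\<dots> = (\<Sum>a\<in>B. (f a)^2 * ?k^2 - 2 * ?k * ?S * f a + ?S^2)"
    by (intro sum.cong refl) (simp add: power2_eq_square algebra_simps)
  also have "\<dots> = ?k^2 * (\<Sum>a\<in>B. (f a)^2) - 2 * ?k * ?S * ?S + ?k * ?S^2"
    by (simp add: sum.distrib sum_subtractf sum_distrib_left sum_distrib_right ac_simps)
  also have "\<dots> = ?k * (?k * (\<Sum>a\<in>B. (f a)^2) - ?S^2)"
    by (simp add: power2_eq_square algebra_simps)
  finally have h: "0 \<le> ?k * (?k * (\<Sum>a\<in>B. (f a)^2) - ?S^2)" .
  show ?thesis
  proof (cases "card B = 0")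
    case True
    then have "B = {}" using assms by simp
    then show ?thesis by simp
  next
    case False
    then have "?k > 0" by simp
    then show ?thesis using h by (simp add: zero_le_mult_iff)
  qed
qed

lemma PZ:
  fixes f :: "'a \<Rightarrow> real"
  assumes fin: "finite A" and m: "card A = m" and s1: "(\<Sum>a\<in>A. f a) = m * \<mu>" and s2: "(\<Sum>a\<in>A. (f a)^2) \<le> s"
    and \<mu>: "\<mu> > 0" and \<alpha>: "0 < \<alpha>" "\<alpha> < 1" and mpos: "m > 0"
  shows "(m * \<mu> * (1 - \<alpha>))^2 \<le> real (card {a\<in>A. \<alpha> * \<mu> \<le> f a}) * s"
proof -
  let ?B = "{a\<in>A. \<alpha> * \<mu> \<le> f a}"
  have finB: "finite ?B" using fin by simp
  have "(\<Sum>a\<in>A - ?B. f a) \<le> (\<Sum>a\<in>A - ?B. \<alpha> * \<mu>)" by (intro sum_mono) auto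
  also have "\<dots> = real (card (A - ?B)) * (\<alpha> * \<mu>)" by simp
  also have "\<dots> \<le> real m * (\<alpha> * \<mu>)"
  proof -
    have "card (A - ?B) \<le> m" using m fin by (metis card_mono Diff_subset)
    then show ?thesis using \<alpha> \<mu> by (intro mult_right_mono) auto
  qed
  finally have c: "(\<Sum>a\<in>A - ?B. f a) \<le> real m * (\<alpha> * \<mu>)" .
  have "(\<Sum>a\<in>A. f a) = (\<Sum>a\<in>?B. f a) + (\<Sum>a\<in>A - ?B. f a)"
    using fin by (metis (no_types, lifting) add.commute mem_Collect_eq subsetI sum.subset_diff)
  then have lb: "(\<Sum>a\<in>?B. f a) \<ge> m * \<mu> * (1 - \<alpha>)" using s1 c by (simp add: algebra_simps)
  have nn: "m * \<mu> * (1 - \<alpha>) \<ge> 0" using \<mu> \<alpha> mpos by simp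
  have "(m * \<mu> * (1 - \<alpha>))^2 \<le> (\<Sum>a\<in>?B. f a)^2" using lb nn by (simp add: power_mono)
  also have "\<dots> \<le> real (card ?B) * (\<Sum>a\<in>?B. (f a)^2)" by (rule cs_ineq[OF finB])
  also have "(\<Sum>a\<in>?B. (f a)^2) \<le> (\<Sum>a\<in>A. (f a)^2)" using fin by (intro sum_mono2) auto
  then have "real (card ?B) * (\<Sum>a\<in>?B. (f a)^2) \<le> real (card ?B) * s"
    using s2 by (intro mult_left_mono) auto
  finally show ?thesis .
qed

lemma purity2: assumes D: "density_mat N \<rho>"
  shows "\<exists>T. (\<Sum>c<N. \<Sum>d<N. \<rho> $$ (d,c) * \<rho> $$ (c,d)) = complex_of_real T \<and> T \<le> 1"
proof -
  let ?T = "\<Sum>c<N. \<Sum>d<N. (cmod (\<rho> $$ (c,d)))^2"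
  have "\<rho> $$ (d,c) * \<rho> $$ (c,d) = complex_of_real ((cmod (\<rho> $$ (c,d)))^2)" if "c < N" "d < N" for c d
  proof -
    have "\<rho> $$ (d,c) * \<rho> $$ (c,d) = \<rho> $$ (c,d) * cnj (\<rho> $$ (c,d))"
      by (subst Dherm[OF D that]) (rule mult.commute)
    then show ?thesis by (simp only: complex_norm_square)
  qed
  then have e: "(\<Sum>c<N. \<Sum>d<N. \<rho> $$ (d,c) * \<rho> $$ (c,d)) = complex_of_real ?T"
    by (simp add: of_real_sum)
  have "?T = Re (\<Sum>c<N. \<Sum>d<N. \<rho> $$ (d,c) * \<rho> $$ (c,d))" unfolding e by simp
  then have "?T \<le> 1" using purity[OF D] by simp
  then show ?thesis using e by blast
qed

lemma fle: "0 < (b::real) \<Longrightarrow> 0 < d \<Longrightarrow> (a / b \<le> c / d \<longleftrightarrow> a * d \<le> c * b)"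
  by (simp add: pos_divide_le_eq pos_le_divide_eq mult.commute mult.left_commute)

lemma final_alg: assumes Q: "0 < (Q::real)" and M: "0 < M"
  and h: "(M * (1 / Q) * c)^2 \<le> K * (2 * M / (Q * (Q + 1)))"
  shows "K / M \<ge> c^2 * (Q + 1) / (2 * Q)"
proof -
  have Q1: "0 < Q + 1" using Q by simp
  have "(M * (1 / Q) * c)^2 = (M * M * c^2) / (Q * Q)" by (simp add: power2_eq_square)
  then have "(M * M * c^2) / (Q * Q) \<le> (K * (2 * M)) / (Q * (Q + 1))" using h by simp
  then have "M * M * c^2 * (Q * (Q + 1)) \<le> K * (2 * M) * (Q * Q)"
    using fle[of "Q * Q" "Q * (Q + 1)"] Q Q1 by simp
  then have "(M * Q) * (M * c^2 * (Q + 1)) \<le> (M * Q) * (K * 2 * Q)"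
    by (simp add: algebra_simps)
  then have "M * c^2 * (Q + 1) \<le> K * 2 * Q" using M Q by (simp add: mult_le_cancel_left_pos)
  then show ?thesis using fle[of "2 * Q" M "c^2 * (Q + 1)" K] M Q by (simp add: algebra_simps)
qed

theorem lemma4:
  fixes n :: nat and \<rho> :: "complex mat" and \<alpha> :: real and x :: nat
  assumes "density_mat (2 ^ n) \<rho>"
    and "0 < \<alpha>" and "\<alpha> < 1"
    and "x < 2 ^ n"
  shows "clifford_prob n (\<lambda>U. outcome_prob n U \<rho> x \<ge> \<alpha> / 2 ^ n) > (1 - \<alpha>)\<^sup>2 / 2"
proof -
  note D = assms(1) and xN = assms(4)
  have R: "\<rho> \<in> carrier_mat (2^n) (2^n)" by (rule Dc[OF D])
  let ?cl = "clifford_mod_phase n"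
  define m where "m = card ?cl"
  have fin: "finite ?cl" by (rule finite_cl)
  have mpos: "m > 0" unfolding m_def using fin cl_nonempty by (simp add: card_gt_0_iff)
  define f where "f C = Re (qv x (rep C) \<rho>)" for C
  have repc: "rep C \<in> carrier_mat (2^n) (2^n)" if "C \<in> ?cl" for C
    using cliffD(1)[OF rep_props(2)[OF that]] .
  have qf: "qv x (rep C) \<rho> = complex_of_real (f C)" if "C \<in> ?cl" for C
    using qv_real[OF D repc[OF that] xN] unfolding f_def by (simp add: complex_eq_iff)
  have ev: "{C \<in> ?cl. \<forall>U\<in>C. \<alpha> / 2 ^ n \<le> outcome_prob n U \<rho> x} = {C \<in> ?cl. \<alpha> * (1 / 2^n) \<le> f C}"
  proof -
    have "(\<forall>U\<in>C. \<alpha> / 2 ^ n \<le> outcome_prob n U \<rho> x) \<longleftrightarrow> \<alpha> * (1 / 2^n) \<le> f C" if C: "C \<in> ?cl" for C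
    proof -
      have "outcome_prob n U \<rho> x = f C" if U: "U \<in> C" for U
      proof -
        obtain c where c: "cmod c = 1" "U = c \<cdot>\<^sub>m rep C" using class_mem[OF C U] by blast
        have "outcome_prob n U \<rho> x = Re (qv x U \<rho>)"
          using outcome_qv[OF _ R xN] c repc[OF C] by simp
        also have "\<dots> = f C" unfolding f_def c(2) using qv_phase[OF repc[OF C] R c(1) xN] by simp
        finally show ?thesis .
      qed
      then show ?thesis using rep_props(1)[OF C] by auto
    qed
    then show ?thesis by blast
  qed
  have rrI: "rr n \<rho> (replicate n pauliI) = 1" using rr_I Dtr[OF D] by simp
  have s1: "(\<Sum>C\<in>?cl. f C) = real m * (1 / 2^n)"
  proof -
    have "complex_of_real (\<Sum>C\<in>?cl. f C) = (\<Sum>C\<in>?cl. qv x (rep C) \<rho>)"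
      by (simp add: of_real_sum qf)
    also have "\<dots> = of_nat m / 2^n" using S1[OF xN R] rrI unfolding m_def by simp
    also have "\<dots> = complex_of_real (real m * (1 / 2^n))" by simp
    finally show ?thesis by (simp only: of_real_eq_iff)
  qed
  obtain T where T: "(\<Sum>c<2^n. \<Sum>d<2^n. \<rho> $$ (d,c) * \<rho> $$ (c,d)) = complex_of_real T" "T \<le> 1"
    using purity2[OF D] by blast
  have s2eq: "4^n * (\<Sum>C\<in>?cl. (f C)^2) = real m + real m / (2^n + 1) * (2^n * T - 1)"
  proof -
    have "complex_of_real (4^n * (\<Sum>C\<in>?cl. (f C)^2)) = 4^n * (\<Sum>C\<in>?cl. (qv x (rep C) \<rho>)^2)"
      by (simp add: of_real_sum qf)
    also have "\<dots> = of_nat m * 1 + of_nat m / (2^n + 1) * (2^n * complex_of_real T - 1)"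
      using S2[OF xN R] rrI parseval[of n \<rho>] T(1) unfolding m_def by simp
    also have "\<dots> = complex_of_real (real m + real m / (2^n + 1) * (2^n * T - 1))"
      by simp
    finally show ?thesis by (simp only: of_real_eq_iff)
  qed
  define s where "s = (real m + real m / (2^n + 1) * (2^n - 1)) / 4^n"
  have s2: "(\<Sum>C\<in>?cl. (f C)^2) \<le> s"
  proof -
    have "real m / (2^n + 1) * (2^n * T - 1) \<le> real m / (2^n + 1) * (2^n - 1)"
      using T(2) by (intro mult_left_mono) auto
    then have "4^n * (\<Sum>C\<in>?cl. (f C)^2) \<le> 4^n * s" unfolding s_def using s2eq by simp
    then show ?thesis by simp
  qed
  have pz: "(real m * (1 / 2^n) * (1 - \<alpha>))^2 \<le> real (card {C \<in> ?cl. \<alpha> * (1 / 2^n) \<le> f C}) * s"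
    by (rule PZ[OF fin m_def[symmetric] s1 s2 _ assms(2) assms(3)]) (use mpos in simp_all)
  let ?k = "real (card {C \<in> ?cl. \<alpha> * (1 / 2^n) \<le> f C})"
  have N: "(2::real)^n > 0" by simp
  have s_eq: "s = 2 * real m / (2^n * (2^n + 1))"
  proof -
    have 4: "(4::real)^n = 2^n * 2^n" by (simp add: power_mult_distrib[symmetric])
    have a: "real m + real m / (Q + 1) * (Q - 1) = 2 * real m * Q / (Q + 1)" if "Q > 0" for Q :: real
    proof -
      have "real m + real m / (Q + 1) * (Q - 1) = (real m * (Q + 1) + real m * (Q - 1)) / (Q + 1)"
        using that by (simp add: field_simps)
      also have "real m * (Q + 1) + real m * (Q - 1) = 2 * real m * Q" by (simp add: algebra_simps)
      finally show ?thesis .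
    qed
    have b: "2 * real m * Q / (Q + 1) / (Q * Q) = 2 * real m / (Q * (Q + 1))" if "Q > 0" for Q :: real
    proof -
      have p: "(Q + 1) * (Q * Q) \<noteq> 0" "Q * (Q + 1) \<noteq> 0" using that by (simp_all add: add_pos_pos)
      show ?thesis unfolding divide_divide_eq_left frac_eq_eq[OF p] by (simp add: algebra_simps)
    qed
    show ?thesis unfolding s_def 4 using a[OF N] b[OF N] by simp
  qed
  have key: "?k / real m \<ge> (1 - \<alpha>)^2 * (2^n + 1) / (2 * 2^n)"
    using final_alg[OF N, of "real m" "(1 - \<alpha>)" ?k] pz s_eq mpos by simp
  have strict: "(1 - \<alpha>)^2 * (2^n + 1) / (2 * 2^n) > (1 - \<alpha>)^2 / 2"
  proof -
    have "(1 - \<alpha>)^2 > 0" using assms(3) by simp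
    then have "(1 - \<alpha>)^2 * 2^n < (1 - \<alpha>)^2 * (2^n + 1)" by simp
    then show ?thesis using N by (simp add: field_simps)
  qed
  have "clifford_prob n (\<lambda>U. outcome_prob n U \<rho> x \<ge> \<alpha> / 2 ^ n) = ?k / real m"
    unfolding clifford_prob_def ev m_def by simp
  then show ?thesis using key strict by linarith
qed

end
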